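(* Let $\{\tilde P_y:y\in T\}$ be a continuous family of smoothing operators of order $\lambda$ on $\tilde U$, and put $P_y=R\circ\tilde P_y\circ E$, $y\in T$. Then $\{P_y:y\in T\}$ is a continuous family of smoothing operators of order $\lambda$ on $U$.
   Context: $U\subset\mathbb R^p$, $U'\subset\mathbb R^k$, $T\subset\mathbb R^q$ open neighborhoods of $0$, $\tilde U=U\times U'\subset\mathbb R^N$. $X_1,\dots,X_d$ smooth vector fields on $U\times T$ of the form $\sum_lX_i^l(x,y)\partial_{x_l}$ (families $\{X_{i,y}\}$ on $U$), and $\tilde X_i=X_i+\sum_{j=1}^ku_{ij}(x,x',y)\partial_{x'_j}$ smooth vector fields on $\tilde U\times T$ which at every point are free of order $m$ (basic commutators of order $\le m$ span a space of dimension $\dim\mathfrak g_{d,m}=N$, $\mathfrak g_{d,m}$ the free nilpotent Lie algebra of step $m$ on $d$ generators) and span $\mathbb R^N$. $dv_y$ is the volume of the Riemannian metric on $\tilde U$ making orthonormal a fixed pointwise basis of such commutators. For $I=(i_1,\dots,i_r)$, $X_{I,y}=X_{i_1,y}\cdots X_{i_r,y}$, $\tilde X_{I,y}$ similarly. $S^2_{k,y}(U)=\{f\in L^2(U):X_{I,y}f\in L^2,|I|\le k\}$ with norm $\sum_{|I|\le k}\|X_{I,y}f\|_{L^2}$; $S^2_{k,y}(\tilde U)$ analogously with $\tilde X_{I,y}$ in $L^2(\tilde U,dv_y)$. A family $\{P_y:C^\infty(\overline V)\to C^\infty(\overline V)\}$ ($V=U$ or $\tilde U$) is a continuous family of smoothing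 operators of order $\lambda\in\mathbb Z_+$ if for every $k\in\mathbb Z_+$ and $y$, $P_y$ extends to a bounded operator $S^2_{k,y}(V)\to S^2_{k+\lambda,y}(V)$ with norms bounded uniformly in $y\in T$. $Ef(x,x')=f(x)$; $Rf(x)=\int_{U'}f(x,x')\zeta(x')dx'$ for a fixed $\zeta\in C^\infty_c(U')$ with $\int\zeta=1$. *)

theory Defs
  imports "HOL-Analysis.Analysis"
begin

fun dderiv :: "'a list \<Rightarrow> ('a::real_normed_vector \<Rightarrow> 'b::real_normed_vector) \<Rightarrow> 'a \<Rightarrow> 'b" where
  "dderiv [] f = f"
| "dderiv (v # vs) f = (\<lambda>z. frechet_derivative (dderiv vs f) (at z) v)"

definition smooth_on :: "'a::real_normed_vector set \<Rightarrow> ('a \<Rightarrow> 'b::real_normed_vector) \<Rightarrow> bool" where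
  "smooth_on S f \<longleftrightarrow> open S \<and> (\<forall>vs. dderiv vs f differentiable_on S)"

text \<open>C-infinity(closure V): functions agreeing on the closure of V with a smooth function
  defined on an open neighbourhood of the closure.\<close>
definition smooth_cl :: "'a::real_normed_vector set \<Rightarrow> ('a \<Rightarrow> real) \<Rightarrow> bool" where
  "smooth_cl V f \<longleftrightarrow> (\<exists>W g. open W \<and> closure V \<subseteq> W \<and> smooth_on W g \<and> (\<forall>z\<in>closure V. f z = g z))"

definition vf_apply :: "('a::real_normed_vector \<Rightarrow> 'a) \<Rightarrow> ('a \<Rightarrow> real) \<Rightarrow> 'a \<Rightarrow> real" where
  "vf_apply Y f z = frechet_derivative f (at z) (Y z)"

text \<open>Lie bracket [X,Y], so that [X,Y]f = X(Yf) - Y(Xf).\<close>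
definition lie_br :: "('a::real_normed_vector \<Rightarrow> 'a) \<Rightarrow> ('a \<Rightarrow> 'a) \<Rightarrow> 'a \<Rightarrow> 'a" where
  "lie_br X Y z = frechet_derivative Y (at z) (X z) - frechet_derivative X (at z) (Y z)"

fun op_I :: "(nat \<Rightarrow> 'a::real_normed_vector \<Rightarrow> 'a) \<Rightarrow> nat list \<Rightarrow> ('a \<Rightarrow> real) \<Rightarrow> 'a \<Rightarrow> real" where
  "op_I Y [] f = f"
| "op_I Y (i # I) f = vf_apply (Y i) (op_I Y I f)"

definition mindices :: "nat \<Rightarrow> nat \<Rightarrow> nat list set" where
  "mindices d k = {I. set I \<subseteq> {..<d} \<and> length I \<le> k}"

datatype brk = Gen nat | Br brk brk

fun brk_order :: "brk \<Rightarrow> nat" where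
  "brk_order (Gen i) = 1"
| "brk_order (Br a b) = brk_order a + brk_order b"

fun brk_gens :: "brk \<Rightarrow> nat set" where
  "brk_gens (Gen i) = {i}"
| "brk_gens (Br a b) = brk_gens a \<union> brk_gens b"

definition brk_ok :: "nat \<Rightarrow> nat \<Rightarrow> brk \<Rightarrow> bool" where
  "brk_ok d m b \<longleftrightarrow> brk_order b \<le> m \<and> brk_gens b \<subseteq> {..<d}"

fun brk_eval :: "(nat \<Rightarrow> 'a::real_normed_vector \<Rightarrow> 'a) \<Rightarrow> brk \<Rightarrow> 'a \<Rightarrow> 'a" where
  "brk_eval Y (Gen i) = Y i"
| "brk_eval Y (Br a b) = lie_br (brk_eval Y a) (brk_eval Y b)"

text \<open>The free associative algebra on generators 0,1,2,... over the reals, as functions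
  from words to coefficients; g_{d,m} is realised as the span of all brackets of
  order at most m in the generators 0..d-1 (free Lie algebra inside the tensor algebra,
  truncated at degree m).\<close>
definition nc_mult :: "(nat list \<Rightarrow> real) \<Rightarrow> (nat list \<Rightarrow> real) \<Rightarrow> nat list \<Rightarrow> real" where
  "nc_mult p q w = (\<Sum>i\<le>length w. p (take i w) * q (drop i w))"

fun brk_poly :: "brk \<Rightarrow> nat list \<Rightarrow> real" where
  "brk_poly (Gen i) = (\<lambda>w. if w = [i] then 1 else 0)"
| "brk_poly (Br a b) = (\<lambda>w. nc_mult (brk_poly a) (brk_poly b) w - nc_mult (brk_poly b) (brk_poly a) w)"

definition nc_indep :: "(nat list \<Rightarrow> real) set \<Rightarrow> bool" where
  "nc_indep S \<longleftrightarrow> (\<forall>c. (\<forall>w. (\<Sum>s\<in>S. c s * s w) = 0) \<longrightarrow> (\<forall>s\<in>S. c s = 0))"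

definition free_nilp_dim :: "nat \<Rightarrow> nat \<Rightarrow> nat" where
  "free_nilp_dim d m = (GREATEST n. \<exists>S. S \<subseteq> brk_poly ` {b. brk_ok d m b} \<and> finite S \<and> card S = n \<and> nc_indep S)"

text \<open>Weighted L2 Sobolev space S^2_k on V w.r.t. vector fields Y (indices < d) and the
  measure w(z) dz (Lebesgue measure with density w).\<close>
definition sob_in :: "nat \<Rightarrow> (nat \<Rightarrow> 'a::euclidean_space \<Rightarrow> 'a) \<Rightarrow> ('a \<Rightarrow> real) \<Rightarrow> 'a set \<Rightarrow> nat \<Rightarrow> ('a \<Rightarrow> real) \<Rightarrow> bool" where
  "sob_in d Y w V k f \<longleftrightarrow> (\<forall>I\<in>mindices d k. set_integrable lborel V (\<lambda>z. (op_I Y I f z)\<^sup>2 * w z))"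

definition sob_norm :: "nat \<Rightarrow> (nat \<Rightarrow> 'a::euclidean_space \<Rightarrow> 'a) \<Rightarrow> ('a \<Rightarrow> real) \<Rightarrow> 'a set \<Rightarrow> nat \<Rightarrow> ('a \<Rightarrow> real) \<Rightarrow> real" where
  "sob_norm d Y w V k f = (\<Sum>I\<in>mindices d k. sqrt (LINT z:V|lborel. (op_I Y I f z)\<^sup>2 * w z))"

definition smoothing_family ::
  "nat \<Rightarrow> ('y \<Rightarrow> nat \<Rightarrow> 'a::euclidean_space \<Rightarrow> 'a) \<Rightarrow> ('y \<Rightarrow> 'a \<Rightarrow> real) \<Rightarrow> 'a set \<Rightarrow> 'y set \<Rightarrow> nat
    \<Rightarrow> ('y \<Rightarrow> ('a \<Rightarrow> real) \<Rightarrow> ('a \<Rightarrow> real)) \<Rightarrow> bool" where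
  "smoothing_family d Y w V T lam P \<longleftrightarrow>
     (\<forall>y\<in>T. \<forall>f. smooth_cl V f \<longrightarrow> smooth_cl V (P y f)) \<and>
     (\<forall>y\<in>T. \<forall>f g a b. smooth_cl V f \<longrightarrow> smooth_cl V g \<longrightarrow>
        (\<forall>z\<in>closure V. P y (\<lambda>v. a * f v + b * g v) z = a * P y f z + b * P y g z)) \<and>
     (\<forall>k. \<exists>C. \<forall>y\<in>T. \<forall>f. smooth_cl V f \<and> sob_in d (Y y) (w y) V k f \<longrightarrow>
        sob_in d (Y y) (w y) V (k + lam) (P y f) \<and>
        sob_norm d (Y y) (w y) V (k + lam) (P y f) \<le> C * sob_norm d (Y y) (w y) V k f)"

definition pjoin :: "real^'p::finite \<Rightarrow> real^'k::finite \<Rightarrow> real^('p + 'k)" where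
  "pjoin x x' = (\<chi> i. case i of Inl a \<Rightarrow> x $ a | Inr b \<Rightarrow> x' $ b)"

definition pfst :: "real^('p::finite + 'k::finite) \<Rightarrow> real^'p" where
  "pfst z = (\<chi> a. z $ Inl a)"

definition psnd :: "real^('p::finite + 'k::finite) \<Rightarrow> real^'k" where
  "psnd z = (\<chi> b. z $ Inr b)"

definition Ut :: "(real^'p::finite) set \<Rightarrow> (real^'k::finite) set \<Rightarrow> (real^('p + 'k)) set" where
  "Ut U U' = {z. pfst z \<in> U \<and> psnd z \<in> U'}"

text \<open>Lifted fields  X~_i = X_i + sum_j u_ij d/dx'_j.\<close>
definition lift_vf :: "(nat \<Rightarrow> 'y \<Rightarrow> real^'p::finite \<Rightarrow> real^'p) \<Rightarrow> (nat \<Rightarrow> 'y \<Rightarrow> real^('p + 'k) \<Rightarrow> real^'k::finite)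
    \<Rightarrow> 'y \<Rightarrow> nat \<Rightarrow> real^('p + 'k) \<Rightarrow> real^('p + 'k)" where
  "lift_vf X u y i z = pjoin (X i y (pfst z)) (u i y z)"

text \<open>Matrix whose columns are the chosen commutators B a at z; the Riemannian volume
  making them orthonormal has density 1/|det| w.r.t. Lebesgue measure.\<close>
definition comm_mat :: "(nat \<Rightarrow> real^'n::finite \<Rightarrow> real^'n) \<Rightarrow> ('n \<Rightarrow> brk) \<Rightarrow> real^'n \<Rightarrow> real^'n^'n" where
  "comm_mat Y B z = (\<chi> i a. brk_eval Y (B a) z $ i)"

definition vol_density :: "(nat \<Rightarrow> real^'n::finite \<Rightarrow> real^'n) \<Rightarrow> ('n \<Rightarrow> brk) \<Rightarrow> real^'n \<Rightarrow> real" where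
  "vol_density Y B z = 1 / \<bar>det (comm_mat Y B z)\<bar>"

definition Eop :: "(real^'p::finite \<Rightarrow> real) \<Rightarrow> real^('p + 'k::finite) \<Rightarrow> real" where
  "Eop f z = f (pfst z)"

definition Rop :: "(real^'k::finite) set \<Rightarrow> (real^'k \<Rightarrow> real) \<Rightarrow> (real^('p::finite + 'k) \<Rightarrow> real) \<Rightarrow> real^'p \<Rightarrow> real" where
  "Rop U' \<zeta> f x = (LINT x':U'|lborel. f (pjoin x x') * \<zeta> x')"

end

theory Submission
  imports Defs
begin

lemma frechet_derivative_cong_open:
  assumes "open X" "x \<in> X" "\<And>x. x \<in> X \<Longrightarrow> f x = g x"
  shows "frechet_derivative f (at x) = frechet_derivative g (at x)"
proof -
  have "(\<lambda>D. (f has_derivative D) (at x)) = (\<lambda>D. (g has_derivative D) (at x))"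
    using has_derivative_transform_within_open[OF _ assms(1,2)] assms(3) by (metis)
  thus ?thesis unfolding frechet_derivative_def by simp
qed

lemma dderiv_cong_open:
  assumes "open S" "\<And>z. z \<in> S \<Longrightarrow> f z = g z" "z \<in> S"
  shows "dderiv vs f z = dderiv vs g z"
  using assms(3)
proof (induction vs arbitrary: z)
  case Nil thus ?case using assms by simp
next
  case (Cons v vs)
  have "frechet_derivative (dderiv vs f) (at z) = frechet_derivative (dderiv vs g) (at z)"
    by (rule frechet_derivative_cong_open[OF assms(1) Cons.prems]) (use Cons.IH in auto)
  thus ?case by simp
qed

lemma dderiv_append: "dderiv (vs @ ws) f = dderiv vs (dderiv ws f)"
  by (induction vs) auto

lemma smooth_on_dderiv: "smooth_on S f \<Longrightarrow> smooth_on S (dderiv vs f)"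
  unfolding smooth_on_def by (metis dderiv_append)

lemma smooth_on_open: "smooth_on S f \<Longrightarrow> open S"
  unfolding smooth_on_def by auto

lemma smooth_on_has_derivative:
  assumes "smooth_on S f" "z \<in> S"
  shows "(dderiv vs f has_derivative (\<lambda>v. dderiv (v # vs) f z)) (at z)"
proof -
  have "dderiv vs f differentiable at z"
    using assms unfolding smooth_on_def by (metis differentiable_on_eq_differentiable_at)
  thus ?thesis using frechet_derivative_works by auto
qed

lemma smooth_on_linear_dir:
  assumes "smooth_on S f" "z \<in> S"
  shows "linear (\<lambda>v. dderiv (v # vs) f z)"
  using smooth_on_has_derivative[OF assms] has_derivative_linear by blast

lemma smooth_on_continuous: "smooth_on S f \<Longrightarrow> continuous_on S (dderiv vs f)"
  unfolding smooth_on_def using differentiable_imp_continuous_on by blast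

lemma smooth_on_cong:
  assumes "smooth_on S f" "\<And>z. z \<in> S \<Longrightarrow> f z = g z"
  shows "smooth_on S g"
proof -
  have o: "open S" using assms smooth_on_open by blast
  show ?thesis unfolding smooth_on_def
  proof (intro conjI allI o)
    fix vs
    have "dderiv vs f differentiable_on S" using assms unfolding smooth_on_def by auto
    moreover have "\<And>z. z \<in> S \<Longrightarrow> dderiv vs f z = dderiv vs g z"
      by (rule dderiv_cong_open[OF o assms(2)])
    ultimately show "dderiv vs g differentiable_on S"
      unfolding differentiable_on_eq_differentiable_at[OF o] differentiable_def
      using has_derivative_transform_within_open[OF _ o] by blast
  qed
qed

lemma smooth_on_subset: "smooth_on S f \<Longrightarrow> open S' \<Longrightarrow> S' \<subseteq> S \<Longrightarrow> smooth_on S' f"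
  unfolding smooth_on_def using differentiable_on_subset by blast

lemma smooth_onI_formula:
  assumes o: "open S"
    and F: "\<And>vs z. z \<in> S \<Longrightarrow> dderiv vs f z = F vs z"
    and D: "\<And>vs z. z \<in> S \<Longrightarrow> (F vs has_derivative (\<lambda>v. F (v # vs) z)) (at z)"
  shows "smooth_on S f"
  unfolding smooth_on_def
proof (intro conjI allI o)
  fix vs
  show "dderiv vs f differentiable_on S"
    unfolding differentiable_on_eq_differentiable_at[OF o]
  proof
    fix z assume z: "z \<in> S"
    have "(dderiv vs f has_derivative (\<lambda>v. F (v # vs) z)) (at z)"
      by (rule has_derivative_transform_within_open[OF D[OF z] o z]) (use F in auto)
    thus "dderiv vs f differentiable at z" unfolding differentiable_def by blast
  qed
qed

lemma dderiv_formula: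
  assumes o: "open S"
    and F0: "\<And>z. z \<in> S \<Longrightarrow> f z = F [] z"
    and D: "\<And>vs z. z \<in> S \<Longrightarrow> (F vs has_derivative (\<lambda>v. F (v # vs) z)) (at z)"
  shows "z \<in> S \<Longrightarrow> dderiv vs f z = F vs z"
proof (induction vs arbitrary: z)
  case Nil thus ?case using F0 by simp
next
  case (Cons v vs)
  have "frechet_derivative (dderiv vs f) (at z) = frechet_derivative (F vs) (at z)"
    by (rule frechet_derivative_cong_open[OF o Cons.prems]) (use Cons.IH in auto)
  also have "\<dots> = (\<lambda>v. F (v # vs) z)"
    using D[OF Cons.prems] frechet_derivative_at by metis
  finally show ?case by simp
qed

lemma smooth_on_formula:
  assumes o: "open S"
    and F0: "\<And>z. z \<in> S \<Longrightarrow> f z = F [] z"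
    and D: "\<And>vs z. z \<in> S \<Longrightarrow> (F vs has_derivative (\<lambda>v. F (v # vs) z)) (at z)"
  shows "smooth_on S f" "\<And>vs z. z \<in> S \<Longrightarrow> dderiv vs f z = F vs z"
  using dderiv_formula[OF assms] smooth_onI_formula[OF o _ D] by blast+

lemma smooth_on_const: "open S \<Longrightarrow> smooth_on S (\<lambda>z. c)"
proof (rule smooth_on_formula(1)[where F="\<lambda>vs z. if vs = [] then c else 0"])
  fix vs and z :: 'a
  show "((\<lambda>z. if vs = [] then c else 0) has_derivative (\<lambda>v. if v # vs = [] then c else 0)) (at z)"
    by (simp add: has_derivative_const)
qed auto


lemma smooth_on_add:
  assumes f: "smooth_on S f" and g: "smooth_on S g"
  shows "smooth_on S (\<lambda>z. f z + g z)"
proof (rule smooth_on_formula(1)[where F="\<lambda>vs z. dderiv vs f z + dderiv vs g z"])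
  show "open S" using f smooth_on_open by blast
  fix vs z assume z: "z \<in> S"
  show "((\<lambda>z. dderiv vs f z + dderiv vs g z) has_derivative
     (\<lambda>v. dderiv (v # vs) f z + dderiv (v # vs) g z)) (at z)"
    by (rule has_derivative_add[OF smooth_on_has_derivative[OF f z] smooth_on_has_derivative[OF g z]])
qed auto

lemma dderiv_add:
  assumes f: "smooth_on S f" and g: "smooth_on S g" and z: "z \<in> S"
  shows "dderiv vs (\<lambda>z. f z + g z) z = dderiv vs f z + dderiv vs g z"
proof (rule smooth_on_formula(2)[where F="\<lambda>vs z. dderiv vs f z + dderiv vs g z", OF _ _ _ z])
  show "open S" using f smooth_on_open by blast
  fix vs z assume z: "z \<in> S"
  show "((\<lambda>z. dderiv vs f z + dderiv vs g z) has_derivative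
     (\<lambda>v. dderiv (v # vs) f z + dderiv (v # vs) g z)) (at z)"
    by (rule has_derivative_add[OF smooth_on_has_derivative[OF f z] smooth_on_has_derivative[OF g z]])
qed auto

lemma smooth_on_linear_post:
  assumes f: "smooth_on S f" and L: "bounded_linear L"
  shows "smooth_on S (\<lambda>z. L (f z))" "\<And>vs z. z \<in> S \<Longrightarrow> dderiv vs (\<lambda>z. L (f z)) z = L (dderiv vs f z)"
proof -
  have o: "open S" using f smooth_on_open by blast
  have D: "((\<lambda>z. L (dderiv vs f z)) has_derivative (\<lambda>v. L (dderiv (v # vs) f z))) (at z)"
    if "z \<in> S" for vs z
    using bounded_linear.has_derivative[OF L smooth_on_has_derivative[OF f that]] by simp
  show "smooth_on S (\<lambda>z. L (f z))"
    by (rule smooth_on_formula(1)[where F="\<lambda>vs z. L (dderiv vs f z)", OF o _ D]) auto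
  show "\<And>vs z. z \<in> S \<Longrightarrow> dderiv vs (\<lambda>z. L (f z)) z = L (dderiv vs f z)"
    by (rule smooth_on_formula(2)[where F="\<lambda>vs z. L (dderiv vs f z)", OF o _ D]) auto
qed

lemma smooth_on_affine_pre:
  fixes L :: "'a::real_normed_vector \<Rightarrow> 'c::real_normed_vector" and c :: 'c
  assumes f: "smooth_on S f" and L: "bounded_linear L"
  defines "S' \<equiv> {z. L z + c \<in> S}"
  shows "smooth_on S' (\<lambda>z. f (L z + c))"
    "\<And>vs z. z \<in> S' \<Longrightarrow> dderiv vs (\<lambda>z. f (L z + c)) z = dderiv (map L vs) f (L z + c)"
proof -
  have "continuous_on UNIV (\<lambda>z. L z + c)"
    by (intro continuous_intros linear_continuous_on L)
  hence o: "open S'" unfolding S'_def using open_vimage[of S "\<lambda>z. L z + c"] smooth_on_open[OF f]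
    by (simp add: vimage_def)
  have D: "((\<lambda>z. dderiv (map L vs) f (L z + c)) has_derivative (\<lambda>v. dderiv (map L (v # vs)) f (L z + c))) (at z)"
    if "z \<in> S'" for vs z
  proof -
    have "((\<lambda>z. L z + c) has_derivative L) (at z)"
      using bounded_linear.has_derivative[OF L has_derivative_ident] by (auto intro!: derivative_eq_intros)
    moreover have "(dderiv (map L vs) f has_derivative (\<lambda>v. dderiv (v # map L vs) f (L z + c))) (at (L z + c))"
      using smooth_on_has_derivative[OF f] that unfolding S'_def by blast
    ultimately show ?thesis using diff_chain_at[of "\<lambda>z. L z + c" L z] by (simp add: o_def)
  qed
  show "smooth_on S' (\<lambda>z. f (L z + c))"
    by (rule smooth_on_formula(1)[where F="\<lambda>vs z. dderiv (map L vs) f (L z + c)", OF o _ D]) auto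
  show "\<And>vs z. z \<in> S' \<Longrightarrow> dderiv vs (\<lambda>z. f (L z + c)) z = dderiv (map L vs) f (L z + c)"
    by (rule smooth_on_formula(2)[where F="\<lambda>vs z. dderiv (map L vs) f (L z + c)", OF o _ D]) auto
qed

fun leib :: "'a list \<Rightarrow> ('a list \<times> 'a list) list" where
  "leib [] = [([], [])]"
| "leib (v # vs) = map (\<lambda>(a, b). (v # a, b)) (leib vs) @ map (\<lambda>(a, b). (a, v # b)) (leib vs)"

lemma has_derivative_sum_list:
  assumes "\<And>x. x \<in> set xs \<Longrightarrow> (F x has_derivative F' x) net"
  shows "((\<lambda>z. \<Sum>x\<leftarrow>xs. F x z) has_derivative (\<lambda>v. \<Sum>x\<leftarrow>xs. F' x v)) net"
  using assms by (induction xs) (auto intro!: derivative_eq_intros)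

lemma smooth_on_mult_aux:
  fixes f g :: "'a::real_normed_vector \<Rightarrow> real"
  assumes f: "smooth_on S f" and g: "smooth_on S g"
  defines "F \<equiv> \<lambda>vs z. \<Sum>(a, b)\<leftarrow>leib vs. dderiv a f z * dderiv b g z"
  shows "smooth_on S (\<lambda>z. f z * g z)" "\<And>vs z. z \<in> S \<Longrightarrow> dderiv vs (\<lambda>z. f z * g z) z = F vs z"
proof -
  have o: "open S" using f smooth_on_open by blast
  have D: "(F vs has_derivative (\<lambda>v. F (v # vs) z)) (at z)" if z: "z \<in> S" for vs z
  proof -
    have "((\<lambda>z. \<Sum>ab\<leftarrow>leib vs. dderiv (fst ab) f z * dderiv (snd ab) g z) has_derivative
       (\<lambda>v. \<Sum>ab\<leftarrow>leib vs. dderiv (v # fst ab) f z * dderiv (snd ab) g z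
              + dderiv (fst ab) f z * dderiv (v # snd ab) g z)) (at z)"
      by (rule has_derivative_sum_list)
        (auto intro!: derivative_eq_intros smooth_on_has_derivative[OF f z] smooth_on_has_derivative[OF g z])
    moreover have "F vs = (\<lambda>z. \<Sum>ab\<leftarrow>leib vs. dderiv (fst ab) f z * dderiv (snd ab) g z)"
      unfolding F_def by (simp add: split_def)
    moreover have "(\<lambda>v. F (v # vs) z) = (\<lambda>v. \<Sum>ab\<leftarrow>leib vs. dderiv (v # fst ab) f z * dderiv (snd ab) g z
              + dderiv (fst ab) f z * dderiv (v # snd ab) g z)"
      unfolding F_def by (simp add: case_prod_beta o_def sum_list_addf)
    ultimately show ?thesis by simp
  qed
  show "smooth_on S (\<lambda>z. f z * g z)"
    by (rule smooth_on_formula(1)[where F=F, OF o _ D]) (auto simp: F_def)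
  show "\<And>vs z. z \<in> S \<Longrightarrow> dderiv vs (\<lambda>z. f z * g z) z = F vs z"
    by (rule smooth_on_formula(2)[where F=F, OF o _ D]) (auto simp: F_def)
qed

lemma smooth_on_mult:
  fixes f g :: "'a::real_normed_vector \<Rightarrow> real"
  shows "smooth_on S f \<Longrightarrow> smooth_on S g \<Longrightarrow> smooth_on S (\<lambda>z. f z * g z)"
  using smooth_on_mult_aux(1) by blast

lemma smooth_on_sum:
  assumes "finite A" "open S" "\<And>i. i \<in> A \<Longrightarrow> smooth_on S (f i)"
  shows "smooth_on S (\<lambda>z. \<Sum>i\<in>A. f i z)"
  using assms by (induction A rule: finite_induct) (auto intro: smooth_on_const smooth_on_add)

lemma smooth_on_scaleR_const:
  fixes f :: "'a::real_normed_vector \<Rightarrow> real"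
  shows "smooth_on S f \<Longrightarrow> smooth_on S (\<lambda>z. f z *\<^sub>R b)"
  using smooth_on_linear_post(1)[of S f "\<lambda>r. r *\<^sub>R b"] bounded_linear_scaleR_left by blast

lemma smooth_on_inner_const:
  shows "smooth_on S f \<Longrightarrow> smooth_on S (\<lambda>z. f z \<bullet> b)"
  using smooth_on_linear_post(1)[of S f "\<lambda>r. r \<bullet> b"] bounded_linear_inner_left by blast

lemma smooth_on_euclidean_iff:
  fixes V :: "'a::real_normed_vector \<Rightarrow> 'b::euclidean_space"
  shows "smooth_on S V \<longleftrightarrow> open S \<and> (\<forall>b\<in>Basis. smooth_on S (\<lambda>z. V z \<bullet> b))"
proof
  assume "smooth_on S V" thus "open S \<and> (\<forall>b\<in>Basis. smooth_on S (\<lambda>z. V z \<bullet> b))"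
    using smooth_on_inner_const smooth_on_open by blast
next
  assume a: "open S \<and> (\<forall>b\<in>Basis. smooth_on S (\<lambda>z. V z \<bullet> b))"
  have "smooth_on S (\<lambda>z. \<Sum>b\<in>Basis. (V z \<bullet> b) *\<^sub>R b)"
    by (rule smooth_on_sum) (use a smooth_on_scaleR_const in auto)
  thus "smooth_on S V" by (simp add: euclidean_representation)
qed

lemma vf_apply_basis:
  fixes f :: "'a::euclidean_space \<Rightarrow> real"
  assumes f: "smooth_on S f" and z: "z \<in> S"
  shows "vf_apply V f z = (\<Sum>b\<in>Basis. (V z \<bullet> b) * dderiv [b] f z)"
proof -
  have lin: "linear (frechet_derivative f (at z))" using smooth_on_linear_dir[OF f z, of "[]"] by simp
  have "vf_apply V f z = dderiv [V z] f z" by (simp add: vf_apply_def)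
  also have "\<dots> = dderiv [\<Sum>b\<in>Basis. (V z \<bullet> b) *\<^sub>R b] f z" by (simp add: euclidean_representation)
  also have "\<dots> = (\<Sum>b\<in>Basis. (V z \<bullet> b) * dderiv [b] f z)"
    by (simp add: linear_sum[OF lin] linear_scale[OF lin])
  finally show ?thesis .
qed

lemma smooth_on_vf_apply:
  fixes f :: "'a::euclidean_space \<Rightarrow> real"
  assumes f: "smooth_on S f" and V: "smooth_on S V"
  shows "smooth_on S (vf_apply V f)"
proof -
  have o: "open S" using f smooth_on_open by blast
  have "smooth_on S (\<lambda>z. \<Sum>b\<in>Basis. (V z \<bullet> b) * dderiv [b] f z)"
    by (rule smooth_on_sum[OF _ o])
      (auto intro!: smooth_on_mult smooth_on_inner_const V smooth_on_dderiv[of S f "[b]" for b, simplified] f)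
  thus ?thesis by (rule smooth_on_cong) (use vf_apply_basis[OF f] in auto)
qed

lemma dderiv_zero_fun: "dderiv vs (\<lambda>z. 0::'b::real_normed_vector) = (\<lambda>z. 0)"
  by (induction vs) auto

lemma dderiv_zero: "dderiv vs (\<lambda>z. 0::'b::real_normed_vector) z = 0"
  by (simp add: dderiv_zero_fun)

lemma dderiv_zero_open:
  assumes "open S" "\<And>z. z \<in> S \<Longrightarrow> f z = 0" "z \<in> S"
  shows "dderiv vs f z = 0"
  using dderiv_cong_open[OF assms(1), of f "\<lambda>_. 0", OF assms(2) assms(3)] dderiv_zero by simp

lemma lint_cbox:
  fixes g :: "'b::euclidean_space \<Rightarrow> real"
  assumes "continuous_on UNIV g" "\<And>t. t \<notin> cbox a b \<Longrightarrow> g t = 0"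
  shows "integrable lborel g" "(LINT t|lborel. g t) = integral (cbox a b) g"
proof -
  have eq: "g = (\<lambda>t. indicator (cbox a b) t *\<^sub>R g t)"
  proof
    fix t show "g t = indicator (cbox a b) t *\<^sub>R g t" using assms(2)[of t] by (cases "t \<in> cbox a b") auto
  qed
  have "integrable lborel (\<lambda>t. indicator (cbox a b) t *\<^sub>R g t)"
    by (rule borel_integrable_compact) (auto intro: continuous_on_subset[OF assms(1)])
  thus ig: "integrable lborel g" using eq by metis
  have "(LINT t|lborel. g t) = integral UNIV g" using integral_lborel[OF ig] by simp
  also have "\<dots> = integral (cbox a b) g"
  proof -
    have "(\<lambda>t. indicator (cbox a b) t *\<^sub>R g t) = (\<lambda>t. if t \<in> cbox a b then g t else 0)" by auto
    hence "integral UNIV g = integral UNIV (\<lambda>t. if t \<in> cbox a b then g t else 0)" using eq by metis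
    thus ?thesis by (simp add: integral_restrict_UNIV)
  qed
  finally show "(LINT t|lborel. g t) = integral (cbox a b) g" .
qed

lemma smooth_on_partial:
  fixes \<Psi> :: "'a::real_normed_vector \<times> 'b::real_normed_vector \<Rightarrow> 'c::real_normed_vector"
  assumes "smooth_on (A \<times> UNIV) \<Psi>" "x \<in> A"
  shows "((\<lambda>x. \<Psi> (x, t)) has_derivative (\<lambda>v. dderiv [(v, 0)] \<Psi> (x, t))) (at x)"
proof -
  have b: "bounded_linear (\<lambda>x::'a. (x, 0::'b))" by (rule bounded_linear_Pair) (auto intro: bounded_linear_ident bounded_linear_zero)
  note s = smooth_on_affine_pre[OF assms(1) b, where c="(0, t)"]
  have "(x, 0) + (0, t) \<in> A \<times> UNIV" using assms(2) by simp
  from smooth_on_has_derivative[OF s(1), of x "[]"] this s(2)[of x "[v]" for v]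
  show ?thesis by simp
qed

lemma param_integral_deriv:
  fixes \<Psi> :: "'a::euclidean_space \<times> 'b::euclidean_space \<Rightarrow> real"
  assumes A: "open A" and s: "smooth_on (A \<times> UNIV) \<Psi>" and K: "compact K"
    and z: "\<And>x t. x \<in> A \<Longrightarrow> t \<notin> K \<Longrightarrow> \<Psi> (x, t) = 0" and x0: "x0 \<in> A"
  shows "((\<lambda>x. LINT t|lborel. \<Psi> (x, t)) has_derivative (\<lambda>v. LINT t|lborel. dderiv [(v, 0)] \<Psi> (x0, t))) (at x0)"
proof -
  obtain a b where ab: "K \<subseteq> cbox a b" using K compact_imp_bounded bounded_subset_cbox_symmetric by metis
  obtain r where r: "r > 0" "ball x0 r \<subseteq> A" using A x0 open_contains_ball by blast
  have o: "open (A \<times> (UNIV::'b set))" using A by (simp add: open_Times)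
  have cont: "continuous_on (A \<times> UNIV) (dderiv vs \<Psi>)" for vs using smooth_on_continuous[OF s] by blast
  have contx: "continuous_on UNIV (\<lambda>t. dderiv vs \<Psi> (x, t))" if "x \<in> A" for x vs
    by (rule continuous_on_compose2[OF cont]) (auto intro!: continuous_intros simp: that)
  have zd: "dderiv vs \<Psi> (x, t) = 0" if "x \<in> A" "t \<notin> K" for x t vs
    by (rule dderiv_zero_open[of "A \<times> - K"]) (use that z open_Times[OF A open_Compl[OF compact_imp_closed[OF K]]] in auto)
  have lin: "bounded_linear (\<lambda>v. dderiv [(v, 0)] \<Psi> (x, t))" if "x \<in> A" for x t
    using smooth_on_partial[OF s that] has_derivative_bounded_linear by blast
  define fx where "fx x t = Blinfun (\<lambda>v. dderiv [(v, 0)] \<Psi> (x, t))" for x t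
  have fxa: "blinfun_apply (fx x t) = (\<lambda>v. dderiv [(v, 0)] \<Psi> (x, t))" if "x \<in> A" for x t
    unfolding fx_def using bounded_linear_Blinfun_apply[OF lin[OF that]] by simp
  have cfx: "continuous_on (ball x0 r \<times> cbox a b) (\<lambda>(x, t). fx x t)"
  proof (rule continuous_on_blinfun_componentwise)
    fix i :: 'a assume "i \<in> Basis"
    have "continuous_on (ball x0 r \<times> cbox a b) (\<lambda>p. dderiv [(i, 0)] \<Psi> p)"
      by (rule continuous_on_subset[OF cont]) (use r in auto)
    moreover have "\<And>p. p \<in> ball x0 r \<times> cbox a b \<Longrightarrow> dderiv [(i, 0)] \<Psi> p = blinfun_apply ((\<lambda>(x, t). fx x t) p) i"
      using fxa r by auto
    ultimately show "continuous_on (ball x0 r \<times> cbox a b) (\<lambda>p. blinfun_apply ((\<lambda>(x, t). fx x t) p) i)"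
      using continuous_on_cong by (metis (no_types, lifting))
  qed
  have cfx0: "continuous_on (cbox a b) (fx x0)"
    by (rule continuous_on_compose2[OF cfx, of _ "\<lambda>t. (x0, t)", simplified])
      (use r in \<open>auto intro!: continuous_intros\<close>)
  have L: "((\<lambda>x. integral (cbox a b) (\<lambda>t. \<Psi> (x, t))) has_derivative integral (cbox a b) (fx x0)) (at x0 within ball x0 r)"
  proof (rule leibniz_rule)
    fix x t assume "x \<in> ball x0 r" "t \<in> cbox a b"
    hence xA: "x \<in> A" using r by auto
    show "((\<lambda>x. \<Psi> (x, t)) has_derivative blinfun_apply (fx x t)) (at x within ball x0 r)"
      using smooth_on_partial[OF s xA] fxa[OF xA] has_derivative_at_withinI by metis
  next
    fix x assume "x \<in> ball x0 r"
    hence xA: "x \<in> A" using r by auto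
    show "(\<lambda>t. \<Psi> (x, t)) integrable_on cbox a b"
      using contx[OF xA, of "[]"] by (auto intro: integrable_continuous continuous_on_subset)
  next
    show "continuous_on (ball x0 r \<times> cbox a b) (\<lambda>(x, t). fx x t)" by (rule cfx)
  qed (use r in auto)
  have L2: "((\<lambda>x. integral (cbox a b) (\<lambda>t. \<Psi> (x, t))) has_derivative integral (cbox a b) (fx x0)) (at x0)"
    using L r at_within_open[of x0 "ball x0 r"] by simp
  have eq1: "(LINT t|lborel. \<Psi> (x, t)) = integral (cbox a b) (\<lambda>t. \<Psi> (x, t))" if "x \<in> A" for x
    using lint_cbox(2)[OF contx[OF that, of "[]"]] z[OF that] ab by auto
  have eq2: "blinfun_apply (integral (cbox a b) (fx x0)) = (\<lambda>v. LINT t|lborel. dderiv [(v, 0)] \<Psi> (x0, t))"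
  proof
    fix v
    have "blinfun_apply (integral (cbox a b) (fx x0)) v = integral (cbox a b) (\<lambda>t. blinfun_apply (fx x0 t) v)"
      by (rule blinfun_apply_integral) (use cfx0 in \<open>auto intro!: integrable_continuous\<close>)
    also have "\<dots> = integral (cbox a b) (\<lambda>t. dderiv [(v, 0)] \<Psi> (x0, t))" using fxa[OF x0] by simp
    also have "\<dots> = (LINT t|lborel. dderiv [(v, 0)] \<Psi> (x0, t))"
      by (rule lint_cbox(2)[symmetric, OF contx[OF x0]]) (use zd[OF x0] ab in blast)
    finally show "blinfun_apply (integral (cbox a b) (fx x0)) v = (LINT t|lborel. dderiv [(v, 0)] \<Psi> (x0, t))" .
  qed
  show ?thesis
    using has_derivative_transform_within_open[OF L2 A x0, of "\<lambda>x. LINT t|lborel. \<Psi> (x, t)"] eq1 eq2 by simp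
qed


lemma param_integral_smooth:
  fixes \<Phi> :: "'a::euclidean_space \<times> 'b::euclidean_space \<Rightarrow> real"
  assumes A: "open A" and s: "smooth_on (A \<times> UNIV) \<Phi>" and K: "compact K"
    and z: "\<And>x t. x \<in> A \<Longrightarrow> t \<notin> K \<Longrightarrow> \<Phi> (x, t) = 0"
  shows "smooth_on A (\<lambda>x. LINT t|lborel. \<Phi> (x, t))"
    "\<And>vs x. x \<in> A \<Longrightarrow> dderiv vs (\<lambda>x. LINT t|lborel. \<Phi> (x, t)) x
        = (LINT t|lborel. dderiv (map (\<lambda>v. (v, 0)) vs) \<Phi> (x, t))"
proof -
  have D: "((\<lambda>x. LINT t|lborel. dderiv (map (\<lambda>v. (v, 0)) vs) \<Phi> (x, t)) has_derivative
      (\<lambda>v. LINT t|lborel. dderiv (map (\<lambda>v. (v, 0)) (v # vs)) \<Phi> (x, t))) (at x)" if x: "x \<in> A" for vs x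
  proof -
    have zd: "dderiv ws \<Phi> (x, t) = 0" if "x \<in> A" "t \<notin> K" for x t ws
      by (rule dderiv_zero_open[of "A \<times> - K"]) (use that z open_Times[OF A open_Compl[OF compact_imp_closed[OF K]]] in auto)
    from param_integral_deriv[OF A smooth_on_dderiv[OF s, of "map (\<lambda>v. (v, 0)) vs"] K zd x]
    show ?thesis by simp
  qed
  show "smooth_on A (\<lambda>x. LINT t|lborel. \<Phi> (x, t))"
    by (rule smooth_on_formula(1)[where F="\<lambda>vs x. LINT t|lborel. dderiv (map (\<lambda>v. (v, 0)) vs) \<Phi> (x, t)", OF A _ D]) auto
  show "\<And>vs x. x \<in> A \<Longrightarrow> dderiv vs (\<lambda>x. LINT t|lborel. \<Phi> (x, t)) x
        = (LINT t|lborel. dderiv (map (\<lambda>v. (v, 0)) vs) \<Phi> (x, t))"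
    by (rule smooth_on_formula(2)[where F="\<lambda>vs x. LINT t|lborel. dderiv (map (\<lambda>v. (v, 0)) vs) \<Phi> (x, t)", OF A _ D]) auto
qed

lemma lint_translate:
  fixes F :: "'b::euclidean_space \<Rightarrow> real"
  assumes "continuous_on UNIV F"
  shows "(LINT t|lborel. F (t + c)) = (LINT t|lborel. F t)"
proof -
  have "(LINT t|lborel. F t) = integral\<^sup>L (distr lborel borel ((+) c)) F"
    by (simp add: lborel_distr_plus)
  also have "\<dots> = (LINT t|lborel. F (c + t))"
    by (rule integral_distr) (auto intro: borel_measurable_continuous_onI[OF assms])
  finally show ?thesis by (simp add: add.commute)
qed

lemma ibp_zero:
  fixes F :: "'b::euclidean_space \<Rightarrow> real"
  assumes s: "smooth_on UNIV F" and K: "compact K" and z: "\<And>t. t \<notin> K \<Longrightarrow> F t = 0"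
  shows "(LINT t|lborel. dderiv [e] F t) = 0"
proof -
  define L where "L = (\<lambda>p::real \<times> 'b. snd p + fst p *\<^sub>R e)"
  have bl: "bounded_linear L" unfolding L_def
    by (auto intro!: bounded_linear_add bounded_linear_snd bounded_linear_scaleR_left bounded_linear_fst
        intro: bounded_linear_compose[of "\<lambda>r. r *\<^sub>R e"])
  note sp = smooth_on_affine_pre[OF s bl, where c=0]
  have sp1: "smooth_on (ball 0 1 \<times> UNIV) (\<lambda>p. F (L p))"
    using smooth_on_subset[OF sp(1), of "ball 0 1 \<times> UNIV"] by (simp add: open_Times)
  define K' where "K' = (\<lambda>(k, s). k - s *\<^sub>R e) ` (K \<times> cball (0::real) 1)"
  have cK': "compact K'" unfolding K'_def
    by (rule compact_continuous_image) (auto intro!: continuous_intros compact_Times K simp: case_prod_beta)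
  have zz: "F (L (x, t)) = 0" if "x \<in> ball 0 1" "t \<notin> K'" for x t
  proof (rule z, rule notI)
    assume "L (x, t) \<in> K"
    hence "t \<in> K'" unfolding K'_def L_def using that(1)
      by (auto intro!: image_eqI[of _ _ "(t + x *\<^sub>R e, x)"])
    thus False using that by simp
  qed
  have D: "((\<lambda>x. LINT t|lborel. F (L (x, t))) has_derivative (\<lambda>v. LINT t|lborel. dderiv [(v, 0)] (\<lambda>p. F (L p)) (0, t))) (at 0)"
    by (rule param_integral_deriv[OF _ sp1 cK' zz]) auto
  have lin: "linear (\<lambda>v. dderiv [v] F t)" for t using smooth_on_linear_dir[OF s, of t "[]"] by simp
  have "dderiv [(v, 0)] (\<lambda>p. F (L p)) (0, t) = v * dderiv [e] F t" for v t
  proof -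
    have "dderiv [(v, 0)] (\<lambda>p. F (L p)) (0, t) = dderiv [v *\<^sub>R e] F t"
      using sp(2)[of "(0, t)" "[(v, 0)]"] by (simp add: L_def)
    also have "\<dots> = v * dderiv [e] F t" using linear_scale[OF lin[of t], of v e] by simp
    finally show ?thesis .
  qed
  hence D2: "((\<lambda>x. LINT t|lborel. F (L (x, t))) has_derivative (\<lambda>v. v * (LINT t|lborel. dderiv [e] F t))) (at 0)"
    using D by simp
  have cF: "continuous_on UNIV F" using smooth_on_continuous[OF s, of "[]"] by simp
  have "(\<lambda>x. LINT t|lborel. F (L (x, t))) = (\<lambda>x. LINT t|lborel. F t)"
    unfolding L_def using lint_translate[OF cF] by simp
  hence "((\<lambda>x::real. LINT t|lborel. F t) has_derivative (\<lambda>v. v * (LINT t|lborel. dderiv [e] F t))) (at 0)"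
    using D2 by simp
  moreover have "((\<lambda>x::real. LINT t|lborel. F t) has_derivative (\<lambda>v. 0)) (at 0)" by (rule has_derivative_const)
  ultimately have "(\<lambda>v::real. v * (LINT t|lborel. dderiv [e] F t)) = (\<lambda>v. 0)"
    using has_derivative_unique by blast
  from fun_cong[OF this, of 1] show ?thesis by simp
qed

lemma pfst_pjoin[simp]: "pfst (pjoin a b) = a" by (simp add: pfst_def pjoin_def)
lemma psnd_pjoin[simp]: "psnd (pjoin a b) = b" by (simp add: psnd_def pjoin_def)
lemma pjoin_split[simp]: "pjoin (pfst z) (psnd z) = z"
  by (simp add: pfst_def psnd_def pjoin_def vec_eq_iff split: sum.splits)
lemma pjoin_eq_iff: "pjoin a b = pjoin c d \<longleftrightarrow> a = c \<and> b = d"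
  by (metis pfst_pjoin psnd_pjoin)
lemma pjoin_add: "pjoin (a + c) (b + d) = pjoin a b + pjoin c d"
  by (simp add: pjoin_def vec_eq_iff split: sum.splits)
lemma pjoin_scaleR: "pjoin (r *\<^sub>R a) (r *\<^sub>R b) = r *\<^sub>R pjoin a b"
  by (simp add: pjoin_def vec_eq_iff split: sum.splits)
lemma pjoin_zero[simp]: "pjoin 0 0 = 0"
  by (simp add: pjoin_def vec_eq_iff split: sum.splits)
lemma pfst_add: "pfst (a + b) = pfst a + pfst b" by (simp add: pfst_def vec_eq_iff)
lemma psnd_add: "psnd (a + b) = psnd a + psnd b" by (simp add: psnd_def vec_eq_iff)
lemma pfst_scaleR: "pfst (r *\<^sub>R a) = r *\<^sub>R pfst a" by (simp add: pfst_def vec_eq_iff)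
lemma psnd_scaleR: "psnd (r *\<^sub>R a) = r *\<^sub>R psnd a" by (simp add: psnd_def vec_eq_iff)

lemma linear_pfst: "linear pfst"
  by (rule linearI) (simp_all add: pfst_add pfst_scaleR)
lemma linear_psnd: "linear psnd"
  by (rule linearI) (simp_all add: psnd_add psnd_scaleR)
lemma bounded_linear_pfst: "bounded_linear pfst"
  using linear_pfst linear_conv_bounded_linear by blast
lemma bounded_linear_psnd: "bounded_linear psnd"
  using linear_psnd linear_conv_bounded_linear by blast
lemma linear_pjoin: "linear (\<lambda>p. pjoin (fst p) (snd p))"
  by (rule linearI) (simp_all add: pjoin_add[symmetric] pjoin_scaleR[symmetric])
lemma bounded_linear_pjoin: "bounded_linear (\<lambda>p. pjoin (fst p) (snd p))"
  using linear_pjoin linear_conv_bounded_linear by blast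
lemma bounded_linear_pjoin1: "bounded_linear (\<lambda>a. pjoin a 0)"
proof -
  have "linear (\<lambda>a. pjoin a 0)" by (rule linearI) (simp_all add: pjoin_add[symmetric] pjoin_scaleR[symmetric])
  thus ?thesis using linear_conv_bounded_linear by blast
qed
lemma bounded_linear_pjoin2: "bounded_linear (\<lambda>b. pjoin 0 b)"
proof -
  have "linear (\<lambda>b. pjoin 0 b)" by (rule linearI) (simp_all add: pjoin_add[symmetric] pjoin_scaleR[symmetric])
  thus ?thesis using linear_conv_bounded_linear by blast
qed
lemma pjoin_decomp: "pjoin a b = pjoin a 0 + pjoin 0 b"
  using pjoin_add[of a 0 0 b] by simp

lemma continuous_on_pfst[continuous_intros]: "continuous_on S f \<Longrightarrow> continuous_on S (\<lambda>x. pfst (f x))"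
  by (rule bounded_linear.continuous_on[OF bounded_linear_pfst])
lemma continuous_on_psnd[continuous_intros]: "continuous_on S f \<Longrightarrow> continuous_on S (\<lambda>x. psnd (f x))"
  by (rule bounded_linear.continuous_on[OF bounded_linear_psnd])
lemma continuous_on_pjoin[continuous_intros]:
  "continuous_on S f \<Longrightarrow> continuous_on S g \<Longrightarrow> continuous_on S (\<lambda>x. pjoin (f x) (g x))"
  using bounded_linear.continuous_on[OF bounded_linear_pjoin continuous_on_Pair, of S f g] by simp

lemma Ut_pjoin[simp]: "pjoin a b \<in> Ut U U' \<longleftrightarrow> a \<in> U \<and> b \<in> U'"
  by (simp add: Ut_def)

lemma Ut_eq: "Ut U U' = (\<lambda>p. pjoin (fst p) (snd p)) ` (U \<times> U')"
proof
  show "Ut U U' \<subseteq> (\<lambda>p. pjoin (fst p) (snd p)) ` (U \<times> U')"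
  proof
    fix z assume "z \<in> Ut U U'"
    thus "z \<in> (\<lambda>p. pjoin (fst p) (snd p)) ` (U \<times> U')"
      by (intro image_eqI[of _ _ "(pfst z, psnd z)"]) (auto simp: Ut_def)
  qed
qed auto

lemma open_Ut: "open U \<Longrightarrow> open U' \<Longrightarrow> open (Ut U U')"
proof -
  assume "open U" "open U'"
  have "Ut U U' = pfst -` U \<inter> psnd -` U'" by (auto simp: Ut_def)
  moreover have "open (pfst -` U)" "open (psnd -` U')"
    using open_vimage[OF \<open>open U\<close>, of pfst] open_vimage[OF \<open>open U'\<close>, of psnd]
      linear_continuous_on[OF bounded_linear_pfst] linear_continuous_on[OF bounded_linear_psnd] by auto
  ultimately show ?thesis by auto
qed

lemma closure_Ut: "closure (Ut U U') = Ut (closure U) (closure U')"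
proof -
  have "inj (\<lambda>p. pjoin (fst p) (snd p))" by (rule injI) (auto simp: pjoin_eq_iff prod_eq_iff)
  hence "closure (Ut U U') = (\<lambda>p. pjoin (fst p) (snd p)) ` closure (U \<times> U')"
    unfolding Ut_eq using closure_injective_linear_image[OF linear_pjoin] by auto
  also have "\<dots> = Ut (closure U) (closure U')" by (simp add: closure_Times Ut_eq)
  finally show ?thesis .
qed

lemma compact_Ut: "compact A \<Longrightarrow> compact B \<Longrightarrow> compact (Ut A B)"
  unfolding Ut_eq by (intro compact_continuous_image compact_Times) (auto intro!: continuous_intros)

lemma bounded_Ut: "bounded A \<Longrightarrow> bounded B \<Longrightarrow> bounded (Ut A B)"
  using compact_Ut[of "closure A" "closure B"] by (metis bounded_closure closure_Ut compact_closure compact_imp_bounded)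


lemma Basis_cart_eq: "(Basis :: (real^'n) set) = (\<lambda>i. axis i 1) ` UNIV"
  by (auto simp: Basis_vec_def)

lemma prod_Basis_cart: "(\<Prod>b\<in>(Basis :: (real^'n) set). f b) = (\<Prod>i\<in>UNIV. f (axis i 1))"
proof -
  have "inj (\<lambda>i::'n. axis i (1::real))" by (rule injI) (simp add: axis_eq_axis)
  thus ?thesis unfolding Basis_cart_eq by (simp add: prod.reindex)
qed

lemma box_pjoin_vimage:
  "(\<lambda>p. pjoin (fst p) (snd p)) -` box l u = box (pfst l) (pfst u) \<times> box (psnd l) (psnd u)"
  by (auto simp: mem_box_cart pfst_def psnd_def pjoin_def split: sum.splits)

lemma lborel_pjoin:
  "distr (lborel :: ((real^'p::finite) \<times> (real^'k::finite)) measure) borel (\<lambda>p. pjoin (fst p) (snd p)) = lborel"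
proof (rule lborel_eqI[symmetric])
  fix l u :: "real^('p + 'k)"
  assume le: "\<And>b. b \<in> Basis \<Longrightarrow> l \<bullet> b \<le> u \<bullet> b"
  have le': "l $ i \<le> u $ i" for i using le[of "axis i 1"] by (simp add: inner_axis)
  have m: "(\<lambda>p. pjoin (fst p) (snd p)) \<in> measurable (lborel :: ((real^'p) \<times> (real^'k)) measure) borel"
    unfolding measurable_lborel2 by (rule borel_measurable_continuous_onI) (auto intro!: continuous_intros)
  have "emeasure (distr (lborel :: ((real^'p) \<times> (real^'k)) measure) borel (\<lambda>p. pjoin (fst p) (snd p))) (box l u)
      = emeasure (lborel :: ((real^'p) \<times> (real^'k)) measure) (box (pfst l) (pfst u) \<times> box (psnd l) (psnd u))"
    by (subst emeasure_distr[OF m]) (auto simp: box_pjoin_vimage[symmetric])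
  also have "\<dots> = emeasure (lborel \<Otimes>\<^sub>M lborel) (box (pfst l) (pfst u) \<times> box (psnd l) (psnd u))"
    by (simp add: lborel_prod)
  also have "\<dots> = emeasure lborel (box (pfst l) (pfst u)) * emeasure lborel (box (psnd l) (psnd u))"
    by (rule lborel.emeasure_pair_measure_Times) auto
  also have "\<dots> = ennreal (\<Prod>a\<in>UNIV. u $ Inl a - l $ Inl a) * ennreal (\<Prod>b\<in>UNIV. u $ Inr b - l $ Inr b)"
  proof -
    have c1: "\<forall>b\<in>Basis. pfst l \<bullet> b \<le> pfst u \<bullet> b" using le' by (auto simp: Basis_cart_eq inner_axis pfst_def)
    have c2: "\<forall>b\<in>Basis. psnd l \<bullet> b \<le> psnd u \<bullet> b" using le' by (auto simp: Basis_cart_eq inner_axis psnd_def)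
    show ?thesis unfolding emeasure_lborel_box_eq using c1 c2
      by (simp add: prod_Basis_cart inner_axis pfst_def psnd_def inner_diff_left)
  qed
  also have "\<dots> = ennreal (\<Prod>i\<in>UNIV. u $ i - l $ i)"
  proof -
    have "(\<Prod>i\<in>(UNIV::('p+'k) set). u $ i - l $ i) = (\<Prod>i\<in>UNIV <+> UNIV. u $ i - l $ i)"
      by (simp add: UNIV_Plus_UNIV)
    also have "\<dots> = (\<Prod>a\<in>UNIV. u $ Inl a - l $ Inl a) * (\<Prod>b\<in>UNIV. u $ Inr b - l $ Inr b)"
      using prod.Plus[of "UNIV::'p set" "UNIV::'k set" "\<lambda>i. u $ i - l $ i"] by (simp add: o_def)
    finally show ?thesis using le' by (simp add: ennreal_mult prod_nonneg)
  qed
  also have "\<dots> = ennreal (\<Prod>b\<in>Basis. (u - l) \<bullet> b)"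
    by (simp add: prod_Basis_cart inner_axis)
  finally show "emeasure (distr (lborel :: ((real^'p) \<times> (real^'k)) measure) borel (\<lambda>p. pjoin (fst p) (snd p))) (box l u)
      = (\<Prod>b\<in>Basis. (u - l) \<bullet> b)" .
qed simp


lemma measurable_pjoin[measurable]:
  "(\<lambda>p. pjoin (fst p) (snd p)) \<in> measurable (lborel :: ((real^'p::finite) \<times> (real^'k::finite)) measure) borel"
  unfolding measurable_lborel2 by (rule borel_measurable_continuous_onI) (auto intro!: continuous_intros)

lemma fubini_Ut:
  fixes H :: "real^('p::finite + 'k::finite) \<Rightarrow> real"
  assumes U: "U \<in> sets borel" and U': "U' \<in> sets borel" and H: "set_integrable lborel (Ut U U') H"
  shows "(LINT z:Ut U U'|lborel. H z) = (LINT x:U|lborel. LINT x':U'|lborel. H (pjoin x x'))"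
proof -
  define h where "h z = indicator (Ut U U') z *\<^sub>R H z" for z
  have ih: "integrable lborel h" using H unfolding set_integrable_def h_def by simp
  have hm: "h \<in> borel_measurable borel" using borel_measurable_integrable[OF ih] by simp
  let ?pj = "\<lambda>p::(real^'p) \<times> (real^'k). pjoin (fst p) (snd p)"
  have "(LINT z:Ut U U'|lborel. H z) = integral\<^sup>L lborel h" unfolding set_lebesgue_integral_def h_def by simp
  also have "\<dots> = integral\<^sup>L (distr lborel borel ?pj) h" by (simp add: lborel_pjoin)
  also have "\<dots> = integral\<^sup>L lborel (\<lambda>p. h (?pj p))" by (rule integral_distr[OF measurable_pjoin hm])
  also have "\<dots> = integral\<^sup>L (lborel \<Otimes>\<^sub>M lborel) (\<lambda>p. h (?pj p))" by (simp add: lborel_prod)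
  also have "\<dots> = (\<integral>x. (\<integral>y. h (pjoin x y) \<partial>lborel) \<partial>lborel)"
  proof -
    have "integrable (distr lborel borel ?pj) h" using ih by (simp add: lborel_pjoin)
    hence "integrable lborel (\<lambda>p. h (?pj p))" using integrable_distr_eq[OF measurable_pjoin hm] by simp
    hence "integrable (lborel \<Otimes>\<^sub>M lborel) (\<lambda>p. h (?pj p))" by (simp add: lborel_prod)
    from lborel_pair.integral_fst'[OF this] show ?thesis by simp
  qed
  also have "\<dots> = (LINT x:U|lborel. LINT x':U'|lborel. H (pjoin x x'))"
    unfolding set_lebesgue_integral_def h_def
    by (rule Bochner_Integration.integral_cong) (auto simp: indicator_def)
  finally show ?thesis .
qed


lemma fubini_Ut_integrable:
  fixes H :: "real^('p::finite + 'k::finite) \<Rightarrow> real"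
  assumes U: "U \<in> sets borel" and U': "U' \<in> sets borel" and H: "set_integrable lborel (Ut U U') H"
  shows "set_integrable lborel U (\<lambda>x. LINT x':U'|lborel. H (pjoin x x'))"
proof -
  define h where "h z = indicator (Ut U U') z *\<^sub>R H z" for z
  have ih: "integrable lborel h" using H unfolding set_integrable_def h_def by simp
  have hm: "h \<in> borel_measurable borel" using borel_measurable_integrable[OF ih] by simp
  let ?pj = "\<lambda>p::(real^'p) \<times> (real^'k). pjoin (fst p) (snd p)"
  have "integrable (distr lborel borel ?pj) h" using ih by (simp add: lborel_pjoin)
  hence "integrable lborel (\<lambda>p. h (?pj p))" using integrable_distr_eq[OF measurable_pjoin hm] by simp
  hence "integrable (lborel \<Otimes>\<^sub>M lborel) (\<lambda>p. h (?pj p))" by (simp add: lborel_prod)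
  from lborel_pair.integrable_fst'[OF this]
  have "integrable lborel (\<lambda>x. \<integral>y. h (pjoin x y) \<partial>lborel)" by simp
  moreover have "(\<lambda>x. \<integral>y. h (pjoin x y) \<partial>lborel) = (\<lambda>x. indicator U x *\<^sub>R (LINT x':U'|lborel. H (pjoin x x')))"
    unfolding set_lebesgue_integral_def h_def by (rule ext) (auto simp: indicator_def)
  ultimately show ?thesis unfolding set_integrable_def by simp
qed

lemma smooth_on_Un:
  assumes "smooth_on S f" "smooth_on S' f"
  shows "smooth_on (S \<union> S') f"
proof -
  have o: "open S" "open S'" using assms smooth_on_open by auto
  show ?thesis using assms unfolding smooth_on_def
    by (auto simp: differentiable_on_eq_differentiable_at[OF open_Un[OF o]]
        differentiable_on_eq_differentiable_at[OF o(1)] differentiable_on_eq_differentiable_at[OF o(2)])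
qed

lemma smooth_on_pre_linear:
  fixes L :: "'a::real_normed_vector \<Rightarrow> 'c::real_normed_vector"
  assumes f: "smooth_on S f" and L: "bounded_linear L" and S': "open S'" "\<And>z. z \<in> S' \<Longrightarrow> L z \<in> S"
  shows "smooth_on S' (\<lambda>z. f (L z))"
  using smooth_on_subset[OF smooth_on_affine_pre(1)[OF f L, where c=0] S'(1)] S'(2) by auto

lemma dderiv_pre_linear:
  fixes L :: "'a::real_normed_vector \<Rightarrow> 'c::real_normed_vector"
  assumes f: "smooth_on S f" and L: "bounded_linear L" and z: "L z \<in> S"
  shows "dderiv vs (\<lambda>z. f (L z)) z = dderiv (map L vs) f (L z)"
  using smooth_on_affine_pre(2)[OF f L, where c=0, of z vs] z by auto


lemma smooth_on_minus:
  "smooth_on S (f :: 'a::real_normed_vector \<Rightarrow> 'b::real_normed_vector) \<Longrightarrow> smooth_on S (\<lambda>z. - f z)"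
  using smooth_on_linear_post(1)[of S f uminus] bounded_linear_minus[OF bounded_linear_ident] by auto

lemma smooth_on_diff:
  "smooth_on S (f :: 'a::real_normed_vector \<Rightarrow> 'b::real_normed_vector) \<Longrightarrow> smooth_on S g \<Longrightarrow> smooth_on S (\<lambda>z. f z - g z)"
  using smooth_on_add[OF _ smooth_on_minus, of S f g] by simp

lemma bl_pair0: "bounded_linear (\<lambda>x::'a::real_normed_vector. (x, 0::'b::real_normed_vector))"
  by (rule bounded_linear_Pair) (auto intro: bounded_linear_ident bounded_linear_zero)

lemma slice_smooth:
  fixes \<Psi> :: "'a::real_normed_vector \<times> 'b::real_normed_vector \<Rightarrow> 'c::real_normed_vector"
  assumes "smooth_on Q \<Psi>"
  shows "smooth_on {z. (z, y) \<in> Q} (\<lambda>z. \<Psi> (z, y))"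
    "(z, y) \<in> Q \<Longrightarrow> dderiv vs (\<lambda>z. \<Psi> (z, y)) z = dderiv (map (\<lambda>v. (v, 0)) vs) \<Psi> (z, y)"
  using smooth_on_affine_pre[OF assms bl_pair0, where c="(0, y)"] by auto

lemma smooth_on_pair0:
  "smooth_on Q (F :: 'a::real_normed_vector \<Rightarrow> 'b::real_normed_vector) \<Longrightarrow> smooth_on Q (\<lambda>p. (F p, 0::'c::real_normed_vector))"
  using smooth_on_linear_post(1)[OF _ bl_pair0] by blast

lemma vf_slice:
  fixes \<Psi> :: "'a::real_normed_vector \<times> 'b::real_normed_vector \<Rightarrow> real"
  assumes "smooth_on Q \<Psi>" "(z, y) \<in> Q"
  shows "vf_apply (\<lambda>z. F (z, y)) (\<lambda>z. \<Psi> (z, y)) z = vf_apply (\<lambda>p. (F p, 0)) \<Psi> (z, y)"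
  using slice_smooth(2)[OF assms, of "[F (z, y)]"] by (simp add: vf_apply_def)

lemma fd_slice_vec:
  fixes G :: "'a::real_normed_vector \<times> 'b::real_normed_vector \<Rightarrow> 'c::euclidean_space"
  assumes G: "smooth_on Q G" and zy: "(z, y) \<in> Q"
  shows "frechet_derivative (\<lambda>z. G (z, y)) (at z) w = (\<Sum>e\<in>Basis. dderiv [(w, 0)] (\<lambda>p. G p \<bullet> e) (z, y) *\<^sub>R e)"
proof -
  have "frechet_derivative (\<lambda>z. G (z, y)) (at z) w = dderiv [w] (\<lambda>z. G (z, y)) z" by simp
  also have "\<dots> = (\<Sum>e\<in>Basis. (dderiv [w] (\<lambda>z. G (z, y)) z \<bullet> e) *\<^sub>R e)" by (simp add: euclidean_representation)
  also have "\<dots> = (\<Sum>e\<in>Basis. dderiv [(w, 0)] (\<lambda>p. G p \<bullet> e) (z, y) *\<^sub>R e)"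
  proof (rule sum.cong[OF refl])
    fix e :: 'c
    have "dderiv [w] (\<lambda>z. G (z, y)) z \<bullet> e = dderiv [w] (\<lambda>z. G (z, y) \<bullet> e) z"
      using smooth_on_linear_post(2)[OF slice_smooth(1)[OF G, of y] bounded_linear_inner_left[of e], of z "[w]"] zy by simp
    also have "\<dots> = dderiv [(w, 0)] (\<lambda>p. G p \<bullet> e) (z, y)"
      using slice_smooth(2)[OF smooth_on_inner_const[OF G] zy, of "[w]"] by simp
    finally show "(dderiv [w] (\<lambda>z. G (z, y)) z \<bullet> e) *\<^sub>R e = dderiv [(w, 0)] (\<lambda>p. G p \<bullet> e) (z, y) *\<^sub>R e" by simp
  qed
  finally show ?thesis .
qed

definition jlie :: "('a::euclidean_space \<times> 'b::euclidean_space \<Rightarrow> 'a) \<Rightarrow> ('a \<times> 'b \<Rightarrow> 'a) \<Rightarrow> 'a \<times> 'b \<Rightarrow> 'a" where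
  "jlie F G p = (\<Sum>e\<in>Basis. (vf_apply (\<lambda>p. (F p, 0)) (\<lambda>p. G p \<bullet> e) p - vf_apply (\<lambda>p. (G p, 0)) (\<lambda>p. F p \<bullet> e) p) *\<^sub>R e)"

lemma lie_slice:
  fixes F G :: "'a::euclidean_space \<times> 'b::euclidean_space \<Rightarrow> 'a"
  assumes F: "smooth_on Q F" and G: "smooth_on Q G" and zy: "(z, y) \<in> Q"
  shows "lie_br (\<lambda>z. F (z, y)) (\<lambda>z. G (z, y)) z = jlie F G (z, y)"
  unfolding lie_br_def jlie_def fd_slice_vec[OF F zy] fd_slice_vec[OF G zy] vf_apply_def
  by (simp add: sum_subtractf scaleR_diff_left)

lemma smooth_jlie:
  fixes F G :: "'a::euclidean_space \<times> 'b::euclidean_space \<Rightarrow> 'a"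
  assumes F: "smooth_on Q F" and G: "smooth_on Q G"
  shows "smooth_on Q (jlie F G)"
proof -
  have o: "open Q" using F smooth_on_open by blast
  show ?thesis unfolding jlie_def[abs_def]
    by (rule smooth_on_sum[OF _ o]) (auto intro!: smooth_on_scaleR_const smooth_on_diff smooth_on_vf_apply
        smooth_on_inner_const smooth_on_pair0 F G)
qed

fun jb :: "(nat \<Rightarrow> 'a::euclidean_space \<times> 'b::euclidean_space \<Rightarrow> 'a) \<Rightarrow> brk \<Rightarrow> 'a \<times> 'b \<Rightarrow> 'a" where
  "jb F (Gen i) = F i"
| "jb F (Br a b) = jlie (jb F a) (jb F b)"

lemma jb_props:
  fixes F :: "nat \<Rightarrow> 'a::euclidean_space \<times> 'b::euclidean_space \<Rightarrow> 'a"
  assumes F: "\<And>i. i \<in> brk_gens b \<Longrightarrow> smooth_on Q (F i)"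
    and Y: "\<And>i z. i \<in> brk_gens b \<Longrightarrow> (z, y) \<in> Q \<Longrightarrow> Y i z = F i (z, y)"
  shows "smooth_on Q (jb F b) \<and> (\<forall>z. (z, y) \<in> Q \<longrightarrow> brk_eval Y b z = jb F b (z, y))"
  using F Y
proof (induction b)
  case (Gen i) thus ?case by auto
next
  case (Br a b)
  have sa: "smooth_on Q (jb F a)" and ea: "\<And>z. (z, y) \<in> Q \<Longrightarrow> brk_eval Y a z = jb F a (z, y)"
    using Br.IH(1)[OF Br.prems(1) Br.prems(2)] by auto
  have sb: "smooth_on Q (jb F b)" and eb: "\<And>z. (z, y) \<in> Q \<Longrightarrow> brk_eval Y b z = jb F b (z, y)"
    using Br.IH(2)[OF Br.prems(1) Br.prems(2)] by auto
  have o: "open Q" using sa smooth_on_open by blast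
  have oy: "open {z. (z, y) \<in> Q}" using slice_smooth(1)[OF sa] smooth_on_open by blast
  have "brk_eval Y (Br a b) z = jb F (Br a b) (z, y)" if zy: "(z, y) \<in> Q" for z
  proof -
    have "brk_eval Y (Br a b) z = lie_br (brk_eval Y a) (brk_eval Y b) z" by simp
    also have "\<dots> = lie_br (\<lambda>z. jb F a (z, y)) (\<lambda>z. jb F b (z, y)) z"
    proof -
      have "frechet_derivative (brk_eval Y a) (at z) = frechet_derivative (\<lambda>z. jb F a (z, y)) (at z)"
        by (rule frechet_derivative_cong_open[OF oy]) (use zy ea in auto)
      moreover have "frechet_derivative (brk_eval Y b) (at z) = frechet_derivative (\<lambda>z. jb F b (z, y)) (at z)"
        by (rule frechet_derivative_cong_open[OF oy]) (use zy eb in auto)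
      ultimately show ?thesis unfolding lie_br_def using ea[OF zy] eb[OF zy] by simp
    qed
    also have "\<dots> = jlie (jb F a) (jb F b) (z, y)" by (rule lie_slice[OF sa sb zy])
    finally show ?thesis by simp
  qed
  thus ?case using smooth_jlie[OF sa sb] by simp
qed

locale setting =
  fixes U :: "(real^'p::finite) set" and U' :: "(real^'k::finite) set" and T :: "(real^'q::finite) set"
    and d :: nat
    and X :: "nat \<Rightarrow> real^'q \<Rightarrow> real^'p \<Rightarrow> real^'p"
    and u :: "nat \<Rightarrow> real^'q \<Rightarrow> real^('p + 'k) \<Rightarrow> real^'k"
    and \<zeta> :: "real^'k \<Rightarrow> real"
  assumes U: "open U" "bounded U"
    and U': "open U'" "bounded U'"
    and T: "bounded T"
    and X_smooth: "\<forall>i<d. \<exists>W. closure U \<times> closure T \<subseteq> W \<and> smooth_on W (\<lambda>(x, y). X i y x)"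
    and u_smooth: "\<forall>i<d. \<exists>W. closure (Ut U U') \<times> closure T \<subseteq> W \<and> smooth_on W (\<lambda>(z, y). u i y z)"
    and \<zeta>: "smooth_on UNIV \<zeta>" "compact (closure {x. \<zeta> x \<noteq> 0})" "closure {x. \<zeta> x \<noteq> 0} \<subseteq> U'"
begin

definition "OX = (\<Inter>i\<in>{..<d}. (SOME W. closure U \<times> closure T \<subseteq> W \<and> smooth_on W (\<lambda>(x, y). X i y x)))"
definition "Ou = (\<Inter>i\<in>{..<d}. (SOME W. closure (Ut U U') \<times> closure T \<subseteq> W \<and> smooth_on W (\<lambda>(z, y). u i y z)))"

lemma OX: "open OX" "closure U \<times> closure T \<subseteq> OX" "\<And>i. i < d \<Longrightarrow> smooth_on OX (\<lambda>(x, y). X i y x)"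
proof -
  let ?W = "\<lambda>i. (SOME W. closure U \<times> closure T \<subseteq> W \<and> smooth_on W (\<lambda>(x, y). X i y x))"
  have W: "closure U \<times> closure T \<subseteq> ?W i \<and> smooth_on (?W i) (\<lambda>(x, y). X i y x)" if "i < d" for i
    using someI_ex[OF X_smooth[rule_format, OF that]] .
  show o: "open OX" unfolding OX_def using W smooth_on_open by (intro open_INT) auto
  show "closure U \<times> closure T \<subseteq> OX" unfolding OX_def using W by auto
  fix i assume "i < d"
  thus "smooth_on OX (\<lambda>(x, y). X i y x)" using W smooth_on_subset[OF _ o] unfolding OX_def by blast
qed

lemma Ou: "open Ou" "closure (Ut U U') \<times> closure T \<subseteq> Ou" "\<And>i. i < d \<Longrightarrow> smooth_on Ou (\<lambda>(z, y). u i y z)"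
proof -
  let ?W = "\<lambda>i. (SOME W. closure (Ut U U') \<times> closure T \<subseteq> W \<and> smooth_on W (\<lambda>(z, y). u i y z))"
  have W: "closure (Ut U U') \<times> closure T \<subseteq> ?W i \<and> smooth_on (?W i) (\<lambda>(z, y). u i y z)" if "i < d" for i
    using someI_ex[OF u_smooth[rule_format, OF that]] .
  show o: "open Ou" unfolding Ou_def using W smooth_on_open by (intro open_INT) auto
  show "closure (Ut U U') \<times> closure T \<subseteq> Ou" unfolding Ou_def using W by auto
  fix i assume "i < d"
  thus "smooth_on Ou (\<lambda>(z, y). u i y z)" using W smooth_on_subset[OF _ o] unfolding Ou_def by blast
qed

definition "Oj = {p. (pfst (fst p), snd p) \<in> OX} \<inter> Ou"

lemma bl_XL: "bounded_linear (\<lambda>p::(real^('p+'k)) \<times> (real^'q). (pfst (fst p), snd p))"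
  by (intro bounded_linear_Pair bounded_linear_compose[OF bounded_linear_pfst] bounded_linear_fst bounded_linear_snd)

lemma Oj: "open Oj" "closure (Ut U U') \<times> closure T \<subseteq> Oj"
proof -
  have "open {p::(real^('p+'k)) \<times> (real^'q). (pfst (fst p), snd p) \<in> OX}"
    using open_vimage[OF OX(1) linear_continuous_on[OF bl_XL]] by (simp add: vimage_def)
  thus "open Oj" unfolding Oj_def using Ou(1) by auto
  show "closure (Ut U U') \<times> closure T \<subseteq> Oj"
  proof
    fix p assume p: "p \<in> closure (Ut U U') \<times> closure T"
    hence "pfst (fst p) \<in> closure U" unfolding closure_Ut by (auto simp: Ut_def)
    thus "p \<in> Oj" unfolding Oj_def using OX(2) Ou(2) p by auto
  qed
qed

definition "XF i p = pjoin (X i (snd p) (pfst (fst p))) 0"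
definition "UF i p = pjoin 0 (u i (snd p) (fst p))"
definition "LF i p = pjoin (X i (snd p) (pfst (fst p))) (u i (snd p) (fst p))"

lemma LF_eq: "LF i p = XF i p + UF i p"
  unfolding LF_def XF_def UF_def using pjoin_decomp by blast

lemma LF_lift: "LF i (z, y) = lift_vf X u y i z"
  by (simp add: LF_def lift_vf_def)

lemma smooth_X_O: "i < d \<Longrightarrow> smooth_on Oj (\<lambda>p. X i (snd p) (pfst (fst p)))"
  using smooth_on_pre_linear[OF OX(3) bl_XL Oj(1)] unfolding Oj_def by auto

lemma smooth_u_O: "i < d \<Longrightarrow> smooth_on Oj (\<lambda>p. u i (snd p) (fst p))"
proof -
  assume i: "i < d"
  have "(\<lambda>(z, y). u i y z) = (\<lambda>p. u i (snd p) (fst p))" by auto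
  thus ?thesis using smooth_on_subset[OF Ou(3)[OF i] Oj(1)] unfolding Oj_def by auto
qed

lemma smooth_XF: "i < d \<Longrightarrow> smooth_on Oj (XF i)"
  unfolding XF_def using smooth_on_linear_post(1)[OF smooth_X_O bounded_linear_pjoin1] by blast

lemma smooth_UF: "i < d \<Longrightarrow> smooth_on Oj (UF i)"
  unfolding UF_def using smooth_on_linear_post(1)[OF smooth_u_O bounded_linear_pjoin2] by blast

lemma smooth_LF: "i < d \<Longrightarrow> smooth_on Oj (LF i)"
  unfolding LF_eq[abs_def] using smooth_on_add[OF smooth_XF smooth_UF] by blast

end


locale setting_B = setting U U' T d X u \<zeta>
  for U :: "(real^'p::finite) set" and U' :: "(real^'k::finite) set" and T :: "(real^'q::finite) set"
    and d X u \<zeta> +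
  fixes B :: "'p + 'k \<Rightarrow> brk"
  assumes B_gens: "\<And>a. brk_gens (B a) \<subseteq> {..<d}"
    and B_basis: "\<forall>y\<in>closure T. \<forall>z\<in>closure (Ut U U'). det (comm_mat (lift_vf X u y) B z) \<noteq> 0"
begin

definition "jB a = jb LF (B a)"

lemma jB: "smooth_on Oj (jB a)" "(z, y) \<in> Oj \<Longrightarrow> brk_eval (lift_vf X u y) (B a) z = jB a (z, y)"
  using jb_props[where b="B a" and Q=Oj and F=LF and Y="lift_vf X u y" and y=y] B_gens[of a] smooth_LF LF_lift unfolding jB_def by auto

definition "Dt p = det (\<chi> i a. jB a p $ i)"

lemma comm_mat_eq: "(z, y) \<in> Oj \<Longrightarrow> det (comm_mat (lift_vf X u y) B z) = Dt (z, y)"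
  unfolding comm_mat_def Dt_def using jB(2) by simp

lemma cont_Dt: "continuous_on Oj Dt"
proof -
  have c: "continuous_on Oj (jB a)" for a using smooth_on_continuous[OF jB(1), of "[]"] by simp
  show ?thesis unfolding Dt_def[abs_def] det_def
    by (intro continuous_intros c)
qed

definition "K0 = closure (Ut U U') \<times> closure T"

lemma K0: "compact K0" "K0 \<subseteq> Oj"
proof -
  have "bounded (Ut U U')" using bounded_Ut U(2) U'(2) by blast
  thus "compact K0" unfolding K0_def using T by (simp add: compact_Times compact_closure)
  show "K0 \<subseteq> Oj" unfolding K0_def using Oj(2) .
qed

lemma Dt_nonzero: "p \<in> K0 \<Longrightarrow> Dt p \<noteq> 0"
proof -
  assume p: "p \<in> K0"
  obtain z y where zy: "p = (z, y)" by fastforce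
  have "z \<in> closure (Ut U U')" "y \<in> closure T" using p zy unfolding K0_def by auto
  hence "det (comm_mat (lift_vf X u y) B z) \<noteq> 0" using B_basis by blast
  moreover have "(z, y) \<in> Oj" using p zy K0(2) by auto
  ultimately show "Dt p \<noteq> 0" using comm_mat_eq zy by simp
qed

lemma Dt_bounds: "\<exists>\<delta> M. 0 < \<delta> \<and> 0 < M \<and> (\<forall>p\<in>K0. \<delta> \<le> \<bar>Dt p\<bar> \<and> \<bar>Dt p\<bar> \<le> M)"
proof (cases "K0 = {}")
  case True thus ?thesis by (intro exI[of _ 1]) auto
next
  case False
  have c: "continuous_on K0 (\<lambda>p. \<bar>Dt p\<bar>)" using continuous_on_subset[OF cont_Dt K0(2)] by (intro continuous_intros)
  obtain p1 where p1: "p1 \<in> K0" "\<forall>p\<in>K0. \<bar>Dt p1\<bar> \<le> \<bar>Dt p\<bar>"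
    using continuous_attains_inf[OF K0(1) False c] by blast
  obtain p2 where p2: "p2 \<in> K0" "\<forall>p\<in>K0. \<bar>Dt p\<bar> \<le> \<bar>Dt p2\<bar>"
    using continuous_attains_sup[OF K0(1) False c] by blast
  show ?thesis using Dt_nonzero[OF p1(1)] p1 p2 by (intro exI[of _ "\<bar>Dt p1\<bar>"] exI[of _ "\<bar>Dt p2\<bar>"]) force
qed

definition "dlo = (SOME \<delta>. \<exists>M. 0 < \<delta> \<and> 0 < M \<and> (\<forall>p\<in>K0. \<delta> \<le> \<bar>Dt p\<bar> \<and> \<bar>Dt p\<bar> \<le> M))"
definition "dhi = (SOME M. 0 < dlo \<and> 0 < M \<and> (\<forall>p\<in>K0. dlo \<le> \<bar>Dt p\<bar> \<and> \<bar>Dt p\<bar> \<le> M))"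

lemma dlo_dhi: "0 < dlo" "0 < dhi" "\<And>p. p \<in> K0 \<Longrightarrow> dlo \<le> \<bar>Dt p\<bar>" "\<And>p. p \<in> K0 \<Longrightarrow> \<bar>Dt p\<bar> \<le> dhi"
proof -
  have "\<exists>M. 0 < dlo \<and> 0 < M \<and> (\<forall>p\<in>K0. dlo \<le> \<bar>Dt p\<bar> \<and> \<bar>Dt p\<bar> \<le> M)"
    unfolding dlo_def using someI_ex[OF Dt_bounds] .
  hence "0 < dlo \<and> 0 < dhi \<and> (\<forall>p\<in>K0. dlo \<le> \<bar>Dt p\<bar> \<and> \<bar>Dt p\<bar> \<le> dhi)"
    unfolding dhi_def by (rule someI_ex)
  thus "0 < dlo" "0 < dhi" "\<And>p. p \<in> K0 \<Longrightarrow> dlo \<le> \<bar>Dt p\<bar>" "\<And>p. p \<in> K0 \<Longrightarrow> \<bar>Dt p\<bar> \<le> dhi" by auto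
qed

definition "wgt y z = vol_density (lift_vf X u y) B z"

lemma wgt_eq: "(z, y) \<in> Oj \<Longrightarrow> wgt y z = 1 / \<bar>Dt (z, y)\<bar>"
  unfolding wgt_def vol_density_def using comm_mat_eq by simp

lemma wgt_bounds:
  assumes "z \<in> closure (Ut U U')" "y \<in> closure T"
  shows "0 < wgt y z" "wgt y z \<le> 1 / dlo" "1 / dhi \<le> wgt y z"
proof -
  have K: "(z, y) \<in> K0" using assms unfolding K0_def by auto
  hence w: "wgt y z = 1 / \<bar>Dt (z, y)\<bar>" using wgt_eq K0(2) by auto
  have a: "dlo \<le> \<bar>Dt (z, y)\<bar>" "\<bar>Dt (z, y)\<bar> \<le> dhi" using dlo_dhi K by auto
  show "0 < wgt y z" using w a dlo_dhi(1) by simp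
  show "wgt y z \<le> 1 / dlo" using w a dlo_dhi(1) by (simp add: frac_le)
  show "1 / dhi \<le> wgt y z" using w a dlo_dhi(1) by (simp add: frac_le)
qed

lemma wgt_cont: "continuous_on {z. (z, y) \<in> Oj \<and> (z, y) \<in> K0} (wgt y)"
proof -
  have c: "continuous_on {z. (z, y) \<in> Oj \<and> (z, y) \<in> K0} (\<lambda>z. 1 / \<bar>Dt (z, y)\<bar>)"
    by (intro continuous_intros continuous_on_compose2[OF cont_Dt]) (auto simp: Dt_nonzero)
  show ?thesis using continuous_on_cong[THEN iffD1, OF refl _ c] wgt_eq by auto
qed

end

lemma dderiv_mult1:
  fixes f g :: "'a::real_normed_vector \<Rightarrow> real"
  assumes "smooth_on S f" "smooth_on S g" "z \<in> S"
  shows "dderiv [w] (\<lambda>z. f z * g z) z = dderiv [w] f z * g z + f z * dderiv [w] g z"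
  using smooth_on_mult_aux(2)[OF assms(1,2) assms(3), of "[w]"] by simp

context setting begin

definition "Ksupp = closure {x. \<zeta> x \<noteq> 0}"

lemma Ksupp: "compact Ksupp" "Ksupp \<subseteq> U'" "\<And>x'. x' \<notin> Ksupp \<Longrightarrow> \<zeta> x' = 0"
  using \<zeta> closure_subset[of "{x. \<zeta> x \<noteq> 0}"] unfolding Ksupp_def by auto

definition "adm (\<phi> :: (real^('p+'k)) \<times> (real^'q) \<Rightarrow> real) \<longleftrightarrow> smooth_on Oj \<phi> \<and> (\<forall>z y. psnd z \<notin> Ksupp \<longrightarrow> \<phi> (z, y) = 0)"

definition "pj = (\<lambda>p::(real^'p) \<times> (real^'k). pjoin (fst p) (snd p))"

lemma open_psnd_notK: "open {p::(real^('p+'k)) \<times> (real^'q). psnd (fst p) \<notin> Ksupp}"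
proof -
  have "continuous_on UNIV (\<lambda>p::(real^('p+'k)) \<times> (real^'q). psnd (fst p))" by (intro continuous_intros)
  from open_vimage[OF open_Compl[OF compact_imp_closed[OF Ksupp(1)]] this] show ?thesis by (simp add: vimage_def)
qed

lemma adm_dderiv_zero: "adm \<phi> \<Longrightarrow> psnd z \<notin> Ksupp \<Longrightarrow> dderiv vs \<phi> (z, y) = 0"
  by (rule dderiv_zero_open[OF open_psnd_notK]) (auto simp: adm_def)

definition "Aint (b :: (real^('p+'k)) \<times> (real^'q) \<Rightarrow> real) y (a :: real^('p+'k) \<Rightarrow> real) x x' = a (pjoin x x') * b (pjoin x x', y)"
definition "Aop b y a x = (LINT x'|lborel. Aint b y a x x')"

lemma gen:
  assumes b: "adm b" and Wa: "open Wa" "closure (Ut U U') \<subseteq> Wa" and a: "smooth_on Wa a" and y: "y \<in> closure T"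
  shows "\<exists>A. open A \<and> closure U \<subseteq> A \<and> smooth_on (A \<times> UNIV) (\<lambda>p. Aint b y a (fst p) (snd p))"
proof -
  define S1 where "S1 = Wa \<inter> {z. (z, y) \<in> Oj}"
  have sb: "smooth_on Oj b" using b adm_def by blast
  have oS1: "open S1" unfolding S1_def using Wa(1) slice_smooth(1)[OF sb, of y] smooth_on_open by blast
  have sH: "smooth_on S1 (\<lambda>z. a z * b (z, y))"
  proof (rule smooth_on_mult)
    show "smooth_on S1 a" by (rule smooth_on_subset[OF a oS1]) (auto simp: S1_def)
    show "smooth_on S1 (\<lambda>z. b (z, y))" by (rule smooth_on_subset[OF slice_smooth(1)[OF sb] oS1]) (auto simp: S1_def)
  qed
  define N1 where "N1 = {p. pj p \<in> S1}"
  have oN1: "open N1" unfolding N1_def pj_def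
    using open_vimage[OF oS1 linear_continuous_on[OF bounded_linear_pjoin]] by (simp add: vimage_def)
  have s1: "smooth_on N1 (\<lambda>p. Aint b y a (fst p) (snd p))"
    unfolding Aint_def using smooth_on_pre_linear[OF sH bounded_linear_pjoin oN1] by (simp add: N1_def pj_def)
  define N2 where "N2 = {p::(real^'p) \<times> (real^'k). snd p \<notin> Ksupp}"
  have oN2: "open N2" unfolding N2_def
    using open_vimage[OF open_Compl[OF compact_imp_closed[OF Ksupp(1)]] continuous_on_snd[OF continuous_on_id]]
    by (simp add: vimage_def)
  have s2: "smooth_on N2 (\<lambda>p. Aint b y a (fst p) (snd p))"
    by (rule smooth_on_cong[OF smooth_on_const[OF oN2, of 0]]) (use b in \<open>auto simp: N2_def Aint_def adm_def\<close>)
  define A where "A = {x. \<forall>x'\<in>Ksupp. (x, x') \<in> N1}"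
  have oA: "open A" unfolding open_subopen[of A]
  proof
    fix x0 assume "x0 \<in> A"
    hence "{x0} \<times> Ksupp \<subseteq> N1" unfolding A_def by auto
    from Elementary_Topology.tube_lemma[OF Ksupp(1) oN1 this] obtain X0 where "x0 \<in> X0" "open X0" "X0 \<times> Ksupp \<subseteq> N1" by blast
    thus "\<exists>T. open T \<and> x0 \<in> T \<and> T \<subseteq> A" unfolding A_def by (intro exI[of _ X0]) auto
  qed
  have cA: "closure U \<subseteq> A"
  proof
    fix x assume x: "x \<in> closure U"
    { fix x' assume "x' \<in> Ksupp"
      hence "x' \<in> closure U'" using Ksupp(2) closure_subset by blast
      hence z: "pjoin x x' \<in> closure (Ut U U')" using x by (simp add: closure_Ut)
      hence "(pjoin x x', y) \<in> Oj" using Oj(2) y by auto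
      hence "(x, x') \<in> N1" using z Wa(2) unfolding N1_def S1_def pj_def by auto }
    thus "x \<in> A" unfolding A_def by auto
  qed
  have "A \<times> UNIV \<subseteq> N1 \<union> N2" unfolding A_def N2_def by auto
  hence "smooth_on (A \<times> UNIV) (\<lambda>p. Aint b y a (fst p) (snd p))"
    using smooth_on_subset[OF smooth_on_Un[OF s1 s2]] oA by (simp add: open_Times)
  thus ?thesis using oA cA by blast
qed

lemma Aint_zero: "adm b \<Longrightarrow> x' \<notin> Ksupp \<Longrightarrow> Aint b y a x x' = 0"
  by (simp add: Aint_def adm_def)

lemma gen_conseq:
  assumes A: "open A" and s: "smooth_on (A \<times> UNIV) (\<lambda>p. Aint b y a (fst p) (snd p))" and b: "adm b"
  shows "smooth_on A (Aop b y a)"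
    "\<And>vs x. x \<in> A \<Longrightarrow> dderiv vs (Aop b y a) x = (LINT t|lborel. dderiv (map (\<lambda>v. (v, 0)) vs) (\<lambda>p. Aint b y a (fst p) (snd p)) (x, t))"
    "\<And>x. x \<in> A \<Longrightarrow> integrable lborel (Aint b y a x)"
    "\<And>x. x \<in> A \<Longrightarrow> (LINT x':U'|lborel. Aint b y a x x') = Aop b y a x"
    "\<And>x. x \<in> A \<Longrightarrow> continuous_on UNIV (Aint b y a x)"
proof -
  have s': "smooth_on (A \<times> UNIV) (\<lambda>p. Aint b y a (fst p) (snd p))" using s .
  note P = param_integral_smooth[OF A s Ksupp(1), simplified]
  have z: "\<And>x t. x \<in> A \<Longrightarrow> t \<notin> Ksupp \<Longrightarrow> Aint b y a x t = 0" using Aint_zero[OF b] by blast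
  show "smooth_on A (Aop b y a)" unfolding Aop_def[abs_def] using P(1)[OF z] by simp
  show "\<And>vs x. x \<in> A \<Longrightarrow> dderiv vs (Aop b y a) x = (LINT t|lborel. dderiv (map (\<lambda>v. (v, 0)) vs) (\<lambda>p. Aint b y a (fst p) (snd p)) (x, t))"
    unfolding Aop_def[abs_def] using P(2)[OF z] by simp
  show c: "continuous_on UNIV (Aint b y a x)" if x: "x \<in> A" for x
  proof -
    have "continuous_on (A \<times> UNIV) (\<lambda>p. Aint b y a (fst p) (snd p))" using smooth_on_continuous[OF s, of "[]"] by simp
    moreover have "continuous_on UNIV (\<lambda>t::real^'k. (x, t))" by (intro continuous_intros)
    ultimately show ?thesis using continuous_on_compose2[of "A \<times> UNIV" "\<lambda>p. Aint b y a (fst p) (snd p)" UNIV "\<lambda>t. (x, t)"] x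
      by auto
  qed
  obtain lo hi where lh: "Ksupp \<subseteq> cbox lo hi" using Ksupp(1) compact_imp_bounded bounded_subset_cbox_symmetric by metis
  show "integrable lborel (Aint b y a x)" if x: "x \<in> A" for x
    by (rule lint_cbox(1)[OF c[OF x], of lo hi]) (use lh z x in blast)
  show "(LINT x':U'|lborel. Aint b y a x x') = Aop b y a x" if x: "x \<in> A" for x
    unfolding Aop_def set_lebesgue_integral_def
    by (rule Bochner_Integration.integral_cong[OF refl]) (use z[OF x] Ksupp(2) in \<open>auto simp: indicator_def\<close>)
qed


lemma aop_props:
  assumes b: "adm b" and Wa: "open Wa" "closure (Ut U U') \<subseteq> Wa" and a: "smooth_on Wa a" and y: "y \<in> closure T"
  obtains A where "open A" "closure U \<subseteq> A" "smooth_on (A \<times> UNIV) (\<lambda>p. Aint b y a (fst p) (snd p))"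
    "smooth_on A (Aop b y a)"
    "\<And>vs x. x \<in> A \<Longrightarrow> dderiv vs (Aop b y a) x = (LINT t|lborel. dderiv (map (\<lambda>v. (v, 0)) vs) (\<lambda>p. Aint b y a (fst p) (snd p)) (x, t))"
    "\<And>x. x \<in> A \<Longrightarrow> integrable lborel (Aint b y a x)"
    "\<And>x. x \<in> A \<Longrightarrow> (LINT x':U'|lborel. Aint b y a x x') = Aop b y a x"
    "\<And>x. x \<in> A \<Longrightarrow> continuous_on UNIV (Aint b y a x)"
proof -
  obtain A where A: "open A" "closure U \<subseteq> A" "smooth_on (A \<times> UNIV) (\<lambda>p. Aint b y a (fst p) (snd p))"
    using gen[OF b Wa a y] by blast
  show ?thesis by (rule that[OF A gen_conseq[OF A(1) A(3) b]])
qed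

definition "phi0 = (\<lambda>p::(real^('p+'k)) \<times> (real^'q). \<zeta> (psnd (fst p)))"

lemma adm_phi0: "adm phi0"
proof -
  have bl: "bounded_linear (\<lambda>p::(real^('p+'k)) \<times> (real^'q). psnd (fst p))"
    by (rule bounded_linear_compose[OF bounded_linear_psnd bounded_linear_fst])
  have "smooth_on Oj phi0" unfolding phi0_def by (rule smooth_on_pre_linear[OF \<zeta>(1) bl Oj(1)]) auto
  thus ?thesis unfolding adm_def phi0_def using Ksupp(3) by auto
qed

lemma Aop_phi0: "Aop phi0 y h x = (LINT x'|lborel. h (pjoin x x') * \<zeta> x')"
  by (simp add: Aop_def Aint_def phi0_def)

lemma adm_vf: "adm \<phi> \<Longrightarrow> smooth_on Oj V \<Longrightarrow> adm (vf_apply V \<phi>)"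
  unfolding adm_def using smooth_on_vf_apply adm_dderiv_zero[unfolded adm_def]
  by (auto simp: vf_apply_def) (metis dderiv.simps adm_def adm_dderiv_zero)

lemma adm_mult: "adm \<phi> \<Longrightarrow> smooth_on Oj c \<Longrightarrow> adm (\<lambda>p. c p * \<phi> p)"
  unfolding adm_def using smooth_on_mult by auto

lemma adm_dderiv: "adm \<phi> \<Longrightarrow> adm (dderiv vs \<phi>)"
  using adm_dderiv_zero smooth_on_dderiv unfolding adm_def by blast

lemma adm_add: "adm \<phi> \<Longrightarrow> adm \<psi> \<Longrightarrow> adm (\<lambda>p. \<phi> p + \<psi> p)"
  unfolding adm_def using smooth_on_add by auto

lemma adm_sum: "finite S \<Longrightarrow> (\<And>e. e \<in> S \<Longrightarrow> adm (\<phi> e)) \<Longrightarrow> adm (\<lambda>p. \<Sum>e\<in>S. \<phi> e p)"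
proof -
  assume f: "finite S" and a: "\<And>e. e \<in> S \<Longrightarrow> adm (\<phi> e)"
  have "smooth_on Oj (\<lambda>p. \<Sum>e\<in>S. \<phi> e p)" by (rule smooth_on_sum[OF f Oj(1)]) (use a adm_def in blast)
  thus ?thesis using a unfolding adm_def by auto
qed

definition "cU i e = (\<lambda>q::(real^('p+'k)) \<times> (real^'q). u i (snd q) (fst q) \<bullet> e)"

lemma smooth_cU: "i < d \<Longrightarrow> smooth_on Oj (cU i e)"
  unfolding cU_def by (rule smooth_on_inner_const[OF smooth_u_O])

definition "phistep i \<phi> = (\<lambda>p. vf_apply (\<lambda>p. (XF i p, 0)) \<phi> p
   + (\<Sum>e\<in>Basis. dderiv [(pjoin 0 e, 0)] (\<lambda>q. cU i e q * \<phi> q) p))"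

lemma adm_phistep: "adm \<phi> \<Longrightarrow> i < d \<Longrightarrow> adm (phistep i \<phi>)"
  unfolding phistep_def
  by (intro adm_add adm_vf adm_sum adm_dderiv adm_mult smooth_on_pair0 smooth_XF smooth_cU) auto


lemma slice_lift: "(\<lambda>z. LF i (z, y)) = lift_vf X u y i"
  by (rule ext) (simp add: LF_lift)

lemma smooth_lift_slice: "i < d \<Longrightarrow> smooth_on {z. (z, y) \<in> Oj} (lift_vf X u y i)"
  using slice_smooth(1)[OF smooth_LF, of i y] slice_lift by simp

lemma Aint_pj: "(\<lambda>p. Aint b y a (fst p) (snd p)) = (\<lambda>p. (\<lambda>z. a z * b (z, y)) (pj p))"
  by (simp add: Aint_def pj_def)

lemma bl_pj: "bounded_linear pj"
  unfolding pj_def by (rule bounded_linear_pjoin)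

lemma Aint_dderiv:
  assumes b: "adm b" and Wa: "open Wa" "closure (Ut U U') \<subseteq> Wa" and a: "smooth_on Wa a" and y: "y \<in> closure T"
    and x: "x \<in> closure U" and t: "t \<in> Ksupp"
  shows "dderiv [w] (\<lambda>p. Aint b y a (fst p) (snd p)) (x, t)
     = dderiv [pj w] a (pjoin x t) * b (pjoin x t, y) + a (pjoin x t) * dderiv [(pj w, 0)] b (pjoin x t, y)"
proof -
  define S1 where "S1 = Wa \<inter> {z. (z, y) \<in> Oj}"
  have sb: "smooth_on Oj b" using b adm_def by blast
  have oS1: "open S1" unfolding S1_def using Wa(1) slice_smooth(1)[OF sb, of y] smooth_on_open by blast
  have sa: "smooth_on S1 a" by (rule smooth_on_subset[OF a oS1]) (auto simp: S1_def)
  have sbs: "smooth_on S1 (\<lambda>z. b (z, y))" by (rule smooth_on_subset[OF slice_smooth(1)[OF sb] oS1]) (auto simp: S1_def)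
  have sH: "smooth_on S1 (\<lambda>z. a z * b (z, y))" by (rule smooth_on_mult[OF sa sbs])
  have "t \<in> closure U'" using t Ksupp(2) closure_subset by blast
  hence zc: "pjoin x t \<in> closure (Ut U U')" using x by (simp add: closure_Ut)
  hence zO: "(pjoin x t, y) \<in> Oj" using Oj(2) y by auto
  hence zS: "pjoin x t \<in> S1" using zc Wa(2) unfolding S1_def by auto
  have "dderiv [w] (\<lambda>p. Aint b y a (fst p) (snd p)) (x, t) = dderiv [pj w] (\<lambda>z. a z * b (z, y)) (pj (x, t))"
    unfolding Aint_pj using dderiv_pre_linear[OF sH bl_pj, of "(x, t)" "[w]"] zS by (simp add: pj_def)
  also have "\<dots> = dderiv [pj w] a (pjoin x t) * b (pjoin x t, y) + a (pjoin x t) * dderiv [pj w] (\<lambda>z. b (z, y)) (pjoin x t)"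
    using dderiv_mult1[OF sa sbs zS] by (simp add: pj_def)
  also have "dderiv [pj w] (\<lambda>z. b (z, y)) (pjoin x t) = dderiv [(pj w, 0)] b (pjoin x t, y)"
    using slice_smooth(2)[OF sb zO, of "[pj w]"] by simp
  finally show ?thesis .
qed

lemma Aint_dderiv_out:
  assumes b: "adm b" and t: "t \<notin> Ksupp"
  shows "dderiv vs (\<lambda>p. Aint b y a (fst p) (snd p)) (x, t) = 0"
proof -
  have o: "open {p::(real^'p) \<times> (real^'k). snd p \<notin> Ksupp}"
    using open_vimage[OF open_Compl[OF compact_imp_closed[OF Ksupp(1)]] continuous_on_snd[OF continuous_on_id]]
    by (simp add: vimage_def)
  show ?thesis by (rule dderiv_zero_open[OF o]) (use t Aint_zero[OF b] in auto)
qed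


lemma pj_simps[simp]: "pj (a, b) = pjoin a b" by (simp add: pj_def)

lemma Aint_ibp:
  assumes c: "adm c" and Wa: "open Wa" "closure (Ut U U') \<subseteq> Wa" and a: "smooth_on Wa a" and y: "y \<in> closure T"
    and x: "x \<in> closure U"
  shows "(LINT t|lborel. Aint c y (dderiv [pjoin 0 e] a) x t) = - (LINT t|lborel. Aint (dderiv [(pjoin 0 e, 0)] c) y a x t)"
proof -
  obtain A where A: "open A" "closure U \<subseteq> A" "smooth_on (A \<times> UNIV) (\<lambda>p. Aint c y a (fst p) (snd p))"
    using gen[OF c Wa a y] by blast
  have xA: "x \<in> A" using A x by auto
  have bl: "bounded_linear (\<lambda>t::real^'k. (0::real^'p, t))"
    by (rule bounded_linear_Pair) (auto intro: bounded_linear_ident bounded_linear_zero)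
  note sl = smooth_on_affine_pre[OF A(3) bl, where c="(x, 0)"]
  have sF: "smooth_on UNIV (Aint c y a x)" using sl(1) xA by simp
  have dF: "dderiv [e] (Aint c y a x) t = Aint c y (dderiv [pjoin 0 e] a) x t + Aint (dderiv [(pjoin 0 e, 0)] c) y a x t" for t
  proof (cases "t \<in> Ksupp")
    case True
    have "dderiv [e] (Aint c y a x) t = dderiv [(0, e)] (\<lambda>p. Aint c y a (fst p) (snd p)) (x, t)"
      using sl(2)[of t "[e]"] xA by simp
    also have "\<dots> = dderiv [pjoin 0 e] a (pjoin x t) * c (pjoin x t, y) + a (pjoin x t) * dderiv [(pjoin 0 e, 0)] c (pjoin x t, y)"
      using Aint_dderiv[OF c Wa a y x True, of "(0, e)"] by simp
    finally show ?thesis by (simp add: Aint_def)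
  next
    case False
    have "dderiv [e] (Aint c y a x) t = dderiv [(0, e)] (\<lambda>p. Aint c y a (fst p) (snd p)) (x, t)"
      using sl(2)[of t "[e]"] xA by simp
    also have "\<dots> = 0" by (rule Aint_dderiv_out[OF c False])
    finally have z0: "dderiv [e] (Aint c y a x) t = 0" .
    have z1: "Aint c y (dderiv [pjoin 0 e] a) x t = 0" by (rule Aint_zero[OF c False])
    have z2: "Aint (dderiv [(pjoin 0 e, 0)] c) y a x t = 0" by (rule Aint_zero[OF adm_dderiv[OF c] False])
    show ?thesis by (simp only: z0 z1 z2 add_0)
  qed
  have "(LINT t|lborel. dderiv [e] (Aint c y a x) t) = 0"
    by (rule ibp_zero[OF sF Ksupp(1)]) (use Aint_zero[OF c] in blast)
  moreover have i1: "integrable lborel (Aint c y (dderiv [pjoin 0 e] a) x)"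
  proof -
    obtain A1 where A1: "open A1" "closure U \<subseteq> A1" "smooth_on (A1 \<times> UNIV) (\<lambda>p. Aint c y (dderiv [pjoin 0 e] a) (fst p) (snd p))"
      using gen[OF c Wa smooth_on_dderiv[OF a] y] by blast
    show ?thesis by (rule gen_conseq(3)[OF A1(1) A1(3) c]) (use A1(2) x in blast)
  qed
  moreover have i2: "integrable lborel (Aint (dderiv [(pjoin 0 e, 0)] c) y a x)"
  proof -
    obtain A1 where A1: "open A1" "closure U \<subseteq> A1" "smooth_on (A1 \<times> UNIV) (\<lambda>p. Aint (dderiv [(pjoin 0 e, 0)] c) y a (fst p) (snd p))"
      using gen[OF adm_dderiv[OF c] Wa a y] by blast
    show ?thesis by (rule gen_conseq(3)[OF A1(1) A1(3) adm_dderiv[OF c]]) (use A1(2) x in blast)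
  qed
  ultimately show ?thesis unfolding dF using Bochner_Integration.integral_add[OF i1 i2] by simp
qed


lemma Aint_integrable:
  assumes b: "adm b" and Wa: "open Wa" "closure (Ut U U') \<subseteq> Wa" and a: "smooth_on Wa a" and y: "y \<in> closure T"
    and x: "x \<in> closure U"
  shows "integrable lborel (Aint b y a x)"
proof -
  obtain A where A: "open A" "closure U \<subseteq> A" "smooth_on (A \<times> UNIV) (\<lambda>p. Aint b y a (fst p) (snd p))"
    using gen[OF b Wa a y] by blast
  show ?thesis by (rule gen_conseq(3)[OF A(1) A(3) b]) (use A(2) x in blast)
qed

lemma Aop_smooth:
  assumes b: "adm b" and Wa: "open Wa" "closure (Ut U U') \<subseteq> Wa" and a: "smooth_on Wa a" and y: "y \<in> closure T"
  shows "\<exists>A. open A \<and> closure U \<subseteq> A \<and> smooth_on A (Aop b y a)"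
proof -
  obtain A where A: "open A" "closure U \<subseteq> A" "smooth_on (A \<times> UNIV) (\<lambda>p. Aint b y a (fst p) (snd p))"
    using gen[OF b Wa a y] by blast
  show ?thesis using gen_conseq(1)[OF A(1) A(3) b] A(1,2) by blast
qed

lemma Aop_U':
  assumes b: "adm b" and Wa: "open Wa" "closure (Ut U U') \<subseteq> Wa" and a: "smooth_on Wa a" and y: "y \<in> closure T"
    and x: "x \<in> closure U"
  shows "(LINT x':U'|lborel. Aint b y a x x') = Aop b y a x"
proof -
  obtain A where A: "open A" "closure U \<subseteq> A" "smooth_on (A \<times> UNIV) (\<lambda>p. Aint b y a (fst p) (snd p))"
    using gen[OF b Wa a y] by blast
  show ?thesis by (rule gen_conseq(4)[OF A(1) A(3) b]) (use A(2) x in blast)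
qed

lemma pjoin0_repr: "pjoin 0 v = (\<Sum>e\<in>Basis. (v \<bullet> e) *\<^sub>R pjoin 0 e)"
proof -
  have lin: "linear (\<lambda>v. pjoin (0::real^'a::finite) (v::real^'b::finite))"
    using bounded_linear_pjoin2 bounded_linear.linear by blast
  have "pjoin (0::real^'a) v = pjoin 0 (\<Sum>e\<in>Basis. (v \<bullet> e) *\<^sub>R e)" by (simp add: euclidean_representation)
  also have "\<dots> = (\<Sum>e\<in>Basis. (v \<bullet> e) *\<^sub>R pjoin 0 e)"
    by (simp add: linear_sum[OF lin] linear_scale[OF lin])
  finally show ?thesis .
qed

lemma KL:
  assumes \<phi>: "adm \<phi>" and Wh: "open Wh" "closure (Ut U U') \<subseteq> Wh" and h: "smooth_on Wh h"
    and y: "y \<in> closure T" and i: "i < d" and x: "x \<in> closure U"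
  shows "vf_apply (X i y) (Aop \<phi> y h) x = Aop \<phi> y (vf_apply (lift_vf X u y i) h) x + Aop (phistep i \<phi>) y h x"
proof -
  define Sy where "Sy = Wh \<inter> {z. (z, y) \<in> Oj}"
  have oSy: "open Sy" unfolding Sy_def using Wh(1) slice_smooth(1)[OF smooth_LF[OF i], of y] smooth_on_open by blast
  have cSy: "closure (Ut U U') \<subseteq> Sy" unfolding Sy_def using Wh(2) Oj(2) y by auto
  have hS: "smooth_on Sy h" by (rule smooth_on_subset[OF h oSy]) (auto simp: Sy_def)
  define h1 where "h1 = vf_apply (lift_vf X u y i) h"
  have h1s: "smooth_on Sy h1" unfolding h1_def
    by (rule smooth_on_vf_apply[OF hS smooth_on_subset[OF smooth_lift_slice[OF i] oSy]]) (auto simp: Sy_def)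
  define bX where "bX = vf_apply (\<lambda>p. (XF i p, 0)) \<phi>"
  have abX: "adm bX" unfolding bX_def by (rule adm_vf[OF \<phi> smooth_on_pair0[OF smooth_XF[OF i]]])
  define c where "c e = (\<lambda>q. cU i e q * \<phi> q)" for e
  have ac: "adm (c e)" for e unfolding c_def by (rule adm_mult[OF \<phi> smooth_cU[OF i]])
  define be where "be e = dderiv [(pjoin 0 e, 0)] (c e)" for e
  have abe: "adm (be e)" for e unfolding be_def by (rule adm_dderiv[OF ac])
  define f1 where "f1 = Aint \<phi> y h1 x"
  define f2 where "f2 = Aint bX y h x"
  define f3 where "f3 e = Aint (c e) y (dderiv [pjoin 0 e] h) x" for e
  define f4 where "f4 e = Aint (be e) y h x" for e
  have i1: "integrable lborel f1" unfolding f1_def by (rule Aint_integrable[OF \<phi> oSy cSy h1s y x])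
  have i2: "integrable lborel f2" unfolding f2_def by (rule Aint_integrable[OF abX Wh h y x])
  have i3: "integrable lborel (f3 e)" for e unfolding f3_def by (rule Aint_integrable[OF ac Wh smooth_on_dderiv[OF h] y x])
  have i4: "integrable lborel (f4 e)" for e unfolding f4_def by (rule Aint_integrable[OF abe Wh h y x])
  obtain A0 where A0: "open A0" "closure U \<subseteq> A0" "smooth_on (A0 \<times> UNIV) (\<lambda>p. Aint \<phi> y h (fst p) (snd p))"
    using gen[OF \<phi> Wh h y] by blast
  have xA0: "x \<in> A0" using A0 x by blast
  have "vf_apply (X i y) (Aop \<phi> y h) x = dderiv [X i y x] (Aop \<phi> y h) x" by (simp add: vf_apply_def)
  also have "\<dots> = (LINT t|lborel. dderiv [(X i y x, 0)] (\<lambda>p. Aint \<phi> y h (fst p) (snd p)) (x, t))"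
    using gen_conseq(2)[OF A0(1) A0(3) \<phi> xA0, of "[X i y x]"] by simp
  also have "\<dots> = (LINT t|lborel. f1 t + f2 t - (\<Sum>e\<in>Basis. f3 e t))"
  proof (rule Bochner_Integration.integral_cong[OF refl])
    fix t
    show "dderiv [(X i y x, 0)] (\<lambda>p. Aint \<phi> y h (fst p) (snd p)) (x, t) = f1 t + f2 t - (\<Sum>e\<in>Basis. f3 e t)"
    proof (cases "t \<in> Ksupp")
      case True
      define z where "z = pjoin x t"
      have "t \<in> closure U'" using True Ksupp(2) closure_subset by blast
      hence zc: "z \<in> closure (Ut U U')" using x by (simp add: closure_Ut z_def)
      hence zW: "z \<in> Wh" using Wh(2) by blast
      define w where "w = pjoin (X i y x) (0::real^'k)"
      have L: "dderiv [(X i y x, 0)] (\<lambda>p. Aint \<phi> y h (fst p) (snd p)) (x, t)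
          = dderiv [w] h z * \<phi> (z, y) + h z * dderiv [(w, 0)] \<phi> (z, y)"
        using Aint_dderiv[OF \<phi> Wh h y x True, of "(X i y x, 0)"] by (simp add: w_def z_def)
      have bXz: "dderiv [(w, 0)] \<phi> (z, y) = bX (z, y)"
        by (simp add: bX_def vf_apply_def XF_def w_def z_def)
      have lin: "linear (\<lambda>v. dderiv [v] h z)" using smooth_on_linear_dir[OF h zW, of "[]"] .
      have w_eq: "w = lift_vf X u y i z - (\<Sum>e\<in>Basis. (u i y z \<bullet> e) *\<^sub>R pjoin 0 e)"
        unfolding pjoin0_repr[symmetric] w_def lift_vf_def z_def using pjoin_decomp[of "X i y x" "u i y (pjoin x t)"] by simp
      have dw: "dderiv [w] h z = h1 z - (\<Sum>e\<in>Basis. (u i y z \<bullet> e) * dderiv [pjoin 0 e] h z)"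
      proof -
        have "dderiv [w] h z = dderiv [lift_vf X u y i z] h z - dderiv [\<Sum>e\<in>Basis. (u i y z \<bullet> e) *\<^sub>R pjoin 0 e] h z"
          unfolding w_eq by (rule linear_diff[OF lin])
        also have "dderiv [\<Sum>e\<in>Basis. (u i y z \<bullet> e) *\<^sub>R pjoin 0 e] h z = (\<Sum>e\<in>Basis. (u i y z \<bullet> e) * dderiv [pjoin 0 e] h z)"
          using linear_sum[OF lin, of "\<lambda>e. (u i y z \<bullet> e) *\<^sub>R pjoin 0 e" Basis] linear_scale[OF lin] by simp
        finally show ?thesis by (simp add: h1_def vf_apply_def)
      qed
      have f3z: "f3 e t = dderiv [pjoin 0 e] h z * ((u i y z \<bullet> e) * \<phi> (z, y))" for e
        by (simp add: f3_def Aint_def c_def cU_def z_def)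
      have "(\<Sum>e\<in>Basis. (u i y z \<bullet> e) * dderiv [pjoin 0 e] h z) * \<phi> (z, y) = (\<Sum>e\<in>Basis. f3 e t)"
        unfolding f3z sum_distrib_right by (rule sum.cong) (simp_all add: mult_ac)
      moreover have "f1 t = h1 z * \<phi> (z, y)" "f2 t = h z * bX (z, y)" by (simp_all add: f1_def f2_def Aint_def z_def)
      ultimately show ?thesis unfolding L bXz dw by (simp add: algebra_simps)
    next
      case False
      have "dderiv [(X i y x, 0)] (\<lambda>p. Aint \<phi> y h (fst p) (snd p)) (x, t) = 0"
        by (rule Aint_dderiv_out[OF \<phi> False])
      thus ?thesis using Aint_zero[OF \<phi> False] Aint_zero[OF abX False] Aint_zero[OF ac False]
        by (simp add: f1_def f2_def f3_def del: dderiv.simps)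
    qed
  qed
  also have "\<dots> = integral\<^sup>L lborel f1 + integral\<^sup>L lborel f2 - (\<Sum>e\<in>Basis. integral\<^sup>L lborel (f3 e))"
    using i1 i2 i3 by (simp add: Bochner_Integration.integral_add Bochner_Integration.integral_diff
        Bochner_Integration.integral_sum)
  also have "(\<Sum>e\<in>Basis. integral\<^sup>L lborel (f3 e)) = - (\<Sum>e\<in>Basis. integral\<^sup>L lborel (f4 e))"
    unfolding f3_def f4_def be_def using Aint_ibp[OF ac Wh h y x] by (simp add: sum_negf)
  also have "integral\<^sup>L lborel f1 = Aop \<phi> y (vf_apply (lift_vf X u y i) h) x"
    by (simp add: f1_def Aop_def h1_def)
  also have "Aop (phistep i \<phi>) y h x = integral\<^sup>L lborel f2 + (\<Sum>e\<in>Basis. integral\<^sup>L lborel (f4 e))"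
  proof -
    have "Aop (phistep i \<phi>) y h x = (LINT t|lborel. f2 t + (\<Sum>e\<in>Basis. f4 e t))"
      unfolding Aop_def
      by (rule Bochner_Integration.integral_cong[OF refl])
        (simp add: f2_def f4_def Aint_def phistep_def bX_def be_def c_def distrib_left sum_distrib_left)
    thus ?thesis using i2 i4 by (simp add: Bochner_Integration.integral_add Bochner_Integration.integral_sum)
  qed
  ultimately show ?thesis by simp
qed

end

lemma op_I_smooth:
  fixes h :: "'a::euclidean_space \<Rightarrow> real"
  assumes "\<And>i. i \<in> set J \<Longrightarrow> smooth_on S (Y i)" "smooth_on S h"
  shows "smooth_on S (op_I Y J h)"
  using assms by (induction J) (auto intro!: smooth_on_vf_apply)

lemma op_I_cong_open:
  assumes "open S" "\<And>z. z \<in> S \<Longrightarrow> f z = g z" "z \<in> S"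
  shows "op_I Y J f z = op_I Y J g z"
  using assms(3)
proof (induction J arbitrary: z)
  case Nil thus ?case using assms(2) by simp
next
  case (Cons i J)
  have "frechet_derivative (op_I Y J f) (at z) = frechet_derivative (op_I Y J g) (at z)"
    by (rule frechet_derivative_cong_open[OF assms(1) Cons.prems]) (use Cons.IH in auto)
  thus ?case by (simp add: vf_apply_def)
qed

lemma sum_list_concat_pairs:
  "(\<Sum>p\<leftarrow>concat (map (\<lambda>q. [f q, g q]) xs). F p) = (\<Sum>q\<leftarrow>xs. F (f q) + F (g q))"
  by (induction xs) (auto simp: add.assoc)

context setting begin

lemma op_lift_smooth:
  assumes Wh: "open Wh" "closure (Ut U U') \<subseteq> Wh" and h: "smooth_on Wh h" and y: "y \<in> closure T"
    and J: "set J \<subseteq> {..<d}"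
  shows "open (Wh \<inter> {z. (z, y) \<in> Oj})" "closure (Ut U U') \<subseteq> Wh \<inter> {z. (z, y) \<in> Oj}"
    "smooth_on (Wh \<inter> {z. (z, y) \<in> Oj}) (op_I (lift_vf X u y) J h)"
proof -
  have oO: "open {z. (z, y) \<in> Oj}" using slice_smooth(1)[OF smooth_on_const[OF Oj(1)], of y] smooth_on_open by blast
  show o: "open (Wh \<inter> {z. (z, y) \<in> Oj})" using Wh(1) oO by blast
  show "closure (Ut U U') \<subseteq> Wh \<inter> {z. (z, y) \<in> Oj}" using Wh(2) Oj(2) y by auto
  show "smooth_on (Wh \<inter> {z. (z, y) \<in> Oj}) (op_I (lift_vf X u y) J h)"
  proof (rule op_I_smooth)
    fix i assume "i \<in> set J"
    hence i: "i < d" using J by auto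
    show "smooth_on (Wh \<inter> {z. (z, y) \<in> Oj}) (lift_vf X u y i)"
      by (rule smooth_on_subset[OF smooth_lift_slice[OF i] o]) auto
  qed (rule smooth_on_subset[OF h o], auto)
qed

lemma RL:
  assumes I: "set I \<subseteq> {..<d}"
  shows "\<exists>TL. (\<forall>q\<in>set TL. set (fst q) \<subseteq> {..<d} \<and> length (fst q) \<le> length I \<and> adm (snd q)) \<and>
    (\<forall>y\<in>closure T. \<forall>Wh h. open Wh \<and> closure (Ut U U') \<subseteq> Wh \<and> smooth_on Wh h \<longrightarrow>
       (\<forall>x\<in>U. op_I (\<lambda>i. X i y) I (Aop phi0 y h) x = (\<Sum>q\<leftarrow>TL. Aop (snd q) y (op_I (lift_vf X u y) (fst q) h) x)))"
  using I
proof (induction I)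
  case Nil
  show ?case by (rule exI[of _ "[([], phi0)]"]) (simp add: adm_phi0)
next
  case (Cons i I)
  have i: "i < d" and I: "set I \<subseteq> {..<d}" using Cons.prems by auto
  obtain TL where TL1: "\<forall>q\<in>set TL. set (fst q) \<subseteq> {..<d} \<and> length (fst q) \<le> length I \<and> adm (snd q)"
    and TL2: "\<forall>y\<in>closure T. \<forall>Wh h. open Wh \<and> closure (Ut U U') \<subseteq> Wh \<and> smooth_on Wh h \<longrightarrow>
       (\<forall>x\<in>U. op_I (\<lambda>i. X i y) I (Aop phi0 y h) x = (\<Sum>q\<leftarrow>TL. Aop (snd q) y (op_I (lift_vf X u y) (fst q) h) x))"
    using Cons.IH[OF I] by blast
  define TL' where "TL' = concat (map (\<lambda>q. [(i # fst q, snd q), (fst q, phistep i (snd q))]) TL)"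
  have P1: "\<forall>q\<in>set TL'. set (fst q) \<subseteq> {..<d} \<and> length (fst q) \<le> length (i # I) \<and> adm (snd q)"
    unfolding TL'_def using TL1 i adm_phistep by force
  have P2: "op_I (\<lambda>i. X i y) (i # I) (Aop phi0 y h) x = (\<Sum>q\<leftarrow>TL'. Aop (snd q) y (op_I (lift_vf X u y) (fst q) h) x)"
    if y: "y \<in> closure T" and Wh: "open Wh" "closure (Ut U U') \<subseteq> Wh" and h: "smooth_on Wh h" and x: "x \<in> U" for y Wh h x
  proof -
    define G where "G q = Aop (snd q) y (op_I (lift_vf X u y) (fst q) h)" for q
    have sG: "\<exists>A. open A \<and> closure U \<subseteq> A \<and> smooth_on A (G q)" if q: "q \<in> set TL" for q
      unfolding G_def using TL1 q op_lift_smooth[OF Wh h y, of "fst q"] y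
      by (intro Aop_smooth) auto
    have dG: "(G q has_derivative (\<lambda>v. dderiv [v] (G q) x)) (at x)" if q: "q \<in> set TL" for q
    proof -
      obtain A where A: "open A" "closure U \<subseteq> A" "smooth_on A (G q)" using sG[OF q] by blast
      have "x \<in> A" using A(2) x closure_subset by blast
      from smooth_on_has_derivative[OF A(3) this, of "[]"] show ?thesis by simp
    qed
    have "op_I (\<lambda>i. X i y) (i # I) (Aop phi0 y h) x = vf_apply (X i y) (op_I (\<lambda>i. X i y) I (Aop phi0 y h)) x" by simp
    also have "\<dots> = vf_apply (X i y) (\<lambda>x. \<Sum>q\<leftarrow>TL. G q x) x"
    proof -
      have "frechet_derivative (op_I (\<lambda>i. X i y) I (Aop phi0 y h)) (at x) = frechet_derivative (\<lambda>x. \<Sum>q\<leftarrow>TL. G q x) (at x)"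
        by (rule frechet_derivative_cong_open[OF U(1) x]) (use TL2 y Wh h in \<open>auto simp: G_def\<close>)
      thus ?thesis by (simp add: vf_apply_def)
    qed
    also have "\<dots> = (\<Sum>q\<leftarrow>TL. vf_apply (X i y) (G q) x)"
    proof -
      have "((\<lambda>x. \<Sum>q\<leftarrow>TL. G q x) has_derivative (\<lambda>v. \<Sum>q\<leftarrow>TL. dderiv [v] (G q) x)) (at x)"
        by (rule has_derivative_sum_list) (rule dG)
      hence "frechet_derivative (\<lambda>x. \<Sum>q\<leftarrow>TL. G q x) (at x) = (\<lambda>v. \<Sum>q\<leftarrow>TL. dderiv [v] (G q) x)"
        by (rule frechet_derivative_at[symmetric])
      thus ?thesis by (simp add: vf_apply_def)
    qed
    also have "\<dots> = (\<Sum>q\<leftarrow>TL. Aop (snd q) y (op_I (lift_vf X u y) (i # fst q) h) x + Aop (phistep i (snd q)) y (op_I (lift_vf X u y) (fst q) h) x)"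
    proof (rule arg_cong[where f=sum_list], rule map_cong[OF refl])
      fix q assume q: "q \<in> set TL"
      note o = op_lift_smooth[OF Wh h y, of "fst q"]
      have "vf_apply (X i y) (G q) x = Aop (snd q) y (vf_apply (lift_vf X u y i) (op_I (lift_vf X u y) (fst q) h)) x
          + Aop (phistep i (snd q)) y (op_I (lift_vf X u y) (fst q) h) x"
        unfolding G_def by (rule KL) (use TL1 q o y i x closure_subset in auto)
      thus "vf_apply (X i y) (G q) x = Aop (snd q) y (op_I (lift_vf X u y) (i # fst q) h) x + Aop (phistep i (snd q)) y (op_I (lift_vf X u y) (fst q) h) x"
        by simp
    qed
    also have "\<dots> = (\<Sum>q\<leftarrow>TL'. Aop (snd q) y (op_I (lift_vf X u y) (fst q) h) x)"
      unfolding TL'_def sum_list_concat_pairs by simp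
    finally show ?thesis .
  qed
  show ?case using P1 P2 by blast
qed

end

lemma set_integrable_closure:
  fixes f :: "'a::euclidean_space \<Rightarrow> real"
  assumes "continuous_on (closure S) f" "bounded S" "S \<in> sets borel"
  shows "set_integrable lborel S f"
proof -
  have "set_integrable lborel (closure S) f"
    unfolding set_integrable_def using borel_integrable_compact[OF _ assms(1)] assms(2) compact_closure by auto
  thus ?thesis by (rule set_integrable_subset) (use assms closure_subset in auto)
qed

lemma set_integral_sum_list:
  fixes F :: "'i \<Rightarrow> 'a \<Rightarrow> real"
  assumes "\<And>q. q \<in> set xs \<Longrightarrow> set_integrable M A (F q)"
  shows "set_integrable M A (\<lambda>x. \<Sum>q\<leftarrow>xs. F q x)"
    "(LINT x:A|M. (\<Sum>q\<leftarrow>xs. F q x)) = (\<Sum>q\<leftarrow>xs. (LINT x:A|M. F q x))"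
proof -
  have "set_integrable M A (\<lambda>x. \<Sum>q\<leftarrow>xs. F q x) \<and> (LINT x:A|M. (\<Sum>q\<leftarrow>xs. F q x)) = (\<Sum>q\<leftarrow>xs. (LINT x:A|M. F q x))"
    using assms
  proof (induction xs)
    case Nil thus ?case by (simp add: set_integrable_def set_lebesgue_integral_def)
  next
    case (Cons a xs)
    hence ih: "set_integrable M A (\<lambda>x. \<Sum>q\<leftarrow>xs. F q x)" "(LINT x:A|M. (\<Sum>q\<leftarrow>xs. F q x)) = (\<Sum>q\<leftarrow>xs. (LINT x:A|M. F q x))"
      by auto
    have fa: "set_integrable M A (F a)" using Cons.prems by simp
    show ?case using set_integral_add[OF fa ih(1)] ih(2) by simp
  qed
  thus "set_integrable M A (\<lambda>x. \<Sum>q\<leftarrow>xs. F q x)"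
    "(LINT x:A|M. (\<Sum>q\<leftarrow>xs. F q x)) = (\<Sum>q\<leftarrow>xs. (LINT x:A|M. F q x))" by auto
qed

lemma cauchy_schwarz_set:
  fixes f :: "'a \<Rightarrow> real"
  assumes A: "A \<in> sets M" "emeasure M A \<noteq> \<infinity>" and f: "set_integrable M A f" and f2: "set_integrable M A (\<lambda>x. (f x)\<^sup>2)"
  shows "(LINT x:A|M. f x)\<^sup>2 \<le> measure M A * (LINT x:A|M. (f x)\<^sup>2)"
proof -
  define I1 where "I1 = (LINT x:A|M. f x)"
  define I2 where "I2 = (LINT x:A|M. (f x)\<^sup>2)"
  define \<mu> where "\<mu> = measure M A"
  have key: "2 * c * I1 \<le> I2 + c\<^sup>2 * \<mu>" for c
  proof -
    have ic: "set_integrable M A (\<lambda>x. c)" unfolding set_integrable_def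
      using A by (simp add: integrable_indicator_iff less_top)
    have i1: "set_integrable M A (\<lambda>x. 2 * c * f x)" using f by simp
    have "0 \<le> (LINT x:A|M. (f x - c)\<^sup>2)"
      unfolding set_lebesgue_integral_def by (rule integral_nonneg_AE) (auto simp: indicator_def)
    also have "(LINT x:A|M. (f x - c)\<^sup>2) = (LINT x:A|M. (f x)\<^sup>2 - 2 * c * f x + c\<^sup>2)"
      by (simp add: power2_diff algebra_simps)
    also have "\<dots> = I2 - 2 * c * I1 + c\<^sup>2 * \<mu>"
    proof -
      have ic2: "set_integrable M A (\<lambda>x. c\<^sup>2)" unfolding set_integrable_def
        using A by (simp add: integrable_indicator_iff less_top)
      have "(LINT x:A|M. (f x)\<^sup>2 - 2 * c * f x + c\<^sup>2) = (LINT x:A|M. (f x)\<^sup>2 - 2 * c * f x) + (LINT x:A|M. c\<^sup>2)"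
        by (rule set_integral_add(2)[OF set_integral_diff(1)[OF f2 i1] ic2])
      also have "(LINT x:A|M. (f x)\<^sup>2 - 2 * c * f x) = I2 - (LINT x:A|M. 2 * c * f x)"
        unfolding I2_def by (rule set_integral_diff(2)[OF f2 i1])
      also have "(LINT x:A|M. 2 * c * f x) = 2 * c * I1" unfolding I1_def by simp
      also have "(LINT x:A|M. c\<^sup>2) = c\<^sup>2 * \<mu>" unfolding \<mu>_def by (simp add: set_integral_const[OF A] mult.commute)
      finally show ?thesis .
    qed
    finally show ?thesis by simp
  qed
  have I2: "0 \<le> I2" unfolding I2_def set_lebesgue_integral_def
    by (rule integral_nonneg_AE) (auto simp: indicator_def)
  have mu: "0 \<le> \<mu>" unfolding \<mu>_def by simp
  show ?thesis
  proof (cases "\<mu> = 0")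
    case True
    have "I1 = 0"
    proof (rule ccontr)
      assume n: "I1 \<noteq> 0"
      have "2 * ((I2 + 1) / I1) * I1 \<le> I2" using key[of "(I2 + 1) / I1"] True by simp
      hence "2 * (I2 + 1) \<le> I2" using n by simp
      thus False using I2 by simp
    qed
    thus ?thesis unfolding I1_def[symmetric] I2_def[symmetric] \<mu>_def[symmetric] using True by simp
  next
    case False
    hence mpos: "0 < \<mu>" using mu by simp
    have "2 * (I1 / \<mu>) * I1 \<le> I2 + (I1 / \<mu>)\<^sup>2 * \<mu>" by (rule key)
    hence "2 * I1\<^sup>2 / \<mu> \<le> I2 + I1\<^sup>2 / \<mu>" using mpos by (simp add: power2_eq_square field_simps)
    hence "I1\<^sup>2 / \<mu> \<le> I2" by simp
    hence "I1\<^sup>2 \<le> \<mu> * I2" using mpos by (simp add: field_simps)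
    thus ?thesis unfolding I1_def I2_def \<mu>_def .
  qed
qed

lemma sq_sum_list_le:
  fixes a :: "'i \<Rightarrow> real"
  shows "(\<Sum>q\<leftarrow>xs. a q)\<^sup>2 \<le> real (length xs) * (\<Sum>q\<leftarrow>xs. (a q)\<^sup>2)"
proof (induction xs)
  case Nil thus ?case by simp
next
  case (Cons b xs)
  define S where "S = (\<Sum>q\<leftarrow>xs. a q)"
  define Q where "Q = (\<Sum>q\<leftarrow>xs. (a q)\<^sup>2)"
  define n where "n = real (length xs)"
  have ih: "S\<^sup>2 \<le> n * Q" using Cons.IH unfolding S_def Q_def n_def .
  have Q0: "0 \<le> Q" unfolding Q_def by (induction xs) auto
  have "2 * a b * S \<le> n * (a b)\<^sup>2 + Q"
  proof -
    have "(n * a b - S)\<^sup>2 \<ge> 0" by simp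
    hence "2 * n * a b * S \<le> n\<^sup>2 * (a b)\<^sup>2 + S\<^sup>2" by (simp add: power2_diff algebra_simps power_mult_distrib)
    hence *: "2 * n * a b * S \<le> n\<^sup>2 * (a b)\<^sup>2 + n * Q" using ih by linarith
    show ?thesis
    proof (cases "n = 0")
      case True
      hence "xs = []" unfolding n_def by simp
      thus ?thesis by (simp add: S_def Q_def True)
    next
      case False
      hence "n > 0" unfolding n_def by simp
      with * have "n * (2 * a b * S) \<le> n * (n * (a b)\<^sup>2 + Q)" by (simp add: algebra_simps power2_eq_square)
      thus ?thesis using \<open>n > 0\<close> by simp
    qed
  qed
  hence "(a b + S)\<^sup>2 \<le> (n + 1) * ((a b)\<^sup>2 + Q)" using ih by (simp add: power2_sum algebra_simps)
  thus ?case by (simp add: S_def Q_def n_def add.commute)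
qed

lemma sqrt_sum_le:
  assumes "finite A" "\<And>i. i \<in> A \<Longrightarrow> 0 \<le> f i"
  shows "sqrt (\<Sum>i\<in>A. f i) \<le> (\<Sum>i\<in>A. sqrt (f i))"
  using assms
proof (induction A rule: finite_induct)
  case empty thus ?case by simp
next
  case (insert a A)
  have nn: "0 \<le> (\<Sum>i\<in>A. f i)" using insert by (auto intro: sum_nonneg)
  have "sqrt (f a + (\<Sum>i\<in>A. f i)) \<le> sqrt (f a) + sqrt (\<Sum>i\<in>A. f i)"
    by (rule sqrt_add_le_add_sqrt) (use insert nn in auto)
  thus ?case using insert by simp
qed

lemma sqrt_sum_list_le:
  assumes "\<And>q. q \<in> set xs \<Longrightarrow> 0 \<le> f q"
  shows "sqrt (\<Sum>q\<leftarrow>xs. f q) \<le> (\<Sum>q\<leftarrow>xs. sqrt (f q))"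
  using assms
proof (induction xs)
  case Nil thus ?case by simp
next
  case (Cons a xs)
  have nn: "0 \<le> (\<Sum>q\<leftarrow>xs. f q)" by (rule sum_list_nonneg) (use Cons.prems in auto)
  have "sqrt (f a + (\<Sum>q\<leftarrow>xs. f q)) \<le> sqrt (f a) + sqrt (\<Sum>q\<leftarrow>xs. f q)"
    by (rule sqrt_add_le_add_sqrt) (use Cons.prems nn in auto)
  thus ?case using Cons by simp
qed

lemma finite_mindices: "finite (mindices d k)"
  unfolding mindices_def using finite_lists_length_le[of "{..<d}" k] by simp

lemma le_sum_nonneg_term:
  fixes f :: "'i \<Rightarrow> real"
  assumes "finite A" "i \<in> A" "\<And>j. j \<in> A \<Longrightarrow> 0 \<le> f j"
  shows "f i \<le> (\<Sum>j\<in>A. f j)"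
  by (rule member_le_sum) (use assms in auto)

lemma set_integrable_cong_on:
  assumes "\<And>x. x \<in> A \<Longrightarrow> f x = g x"
  shows "set_integrable M A f \<longleftrightarrow> set_integrable M A g"
proof -
  have "(\<lambda>x. indicator A x *\<^sub>R f x) = (\<lambda>x. indicator A x *\<^sub>R g x)"
  proof
    fix x show "indicator A x *\<^sub>R f x = indicator A x *\<^sub>R g x" using assms[of x] by (cases "x \<in> A") auto
  qed
  thus ?thesis unfolding set_integrable_def by simp
qed

context setting_B begin

lemma adm_bound: "adm \<phi> \<Longrightarrow> \<exists>C. 0 \<le> C \<and> (\<forall>p\<in>K0. \<bar>\<phi> p\<bar> \<le> C)"
proof -
  assume a: "adm \<phi>"
  have "continuous_on K0 \<phi>" using smooth_on_continuous[of Oj \<phi> "[]"] a K0(2) continuous_on_subset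
    unfolding adm_def by auto
  hence "bounded (\<phi> ` K0)" using compact_continuous_image[OF _ K0(1)] compact_imp_bounded by blast
  then obtain C where "\<forall>p\<in>K0. norm (\<phi> p) \<le> C" unfolding bounded_iff by auto
  thus ?thesis by (intro exI[of _ "max C 0"]) auto
qed

lemma U'_borel: "U' \<in> sets lborel" using U'(1) by simp
lemma U_borel: "U \<in> sets lborel" using U(1) by simp
lemma U'_fin: "emeasure lborel U' \<noteq> \<infinity>" using emeasure_bounded_finite[OF U'(2)] by simp

lemma wgt_cont_closure:
  assumes y: "y \<in> closure T"
  shows "continuous_on (closure (Ut U U')) (wgt y)"
  by (rule continuous_on_subset[OF wgt_cont]) (use y Oj(2) in \<open>auto simp: K0_def\<close>)

lemma term_est:
  assumes \<phi>: "adm \<phi>" and C: "\<forall>p\<in>K0. \<bar>\<phi> p\<bar> \<le> C" and y: "y \<in> closure T"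
    and Wa: "open Wa" "closure (Ut U U') \<subseteq> Wa" and a: "smooth_on Wa a" and x: "x \<in> closure U"
  shows "(Aop \<phi> y a x)\<^sup>2 \<le> measure lborel U' * C\<^sup>2 * dhi * (LINT x':U'|lborel. (a (pjoin x x'))\<^sup>2 * wgt y (pjoin x x'))"
proof -
  have i1: "set_integrable lborel U' (Aint \<phi> y a x)"
    unfolding set_integrable_def by (rule integrable_mult_indicator[OF U'_borel Aint_integrable[OF \<phi> Wa a y x]])
  have sq: "(Aint \<phi> y a x x')\<^sup>2 = Aint (\<lambda>p. \<phi> p * \<phi> p) y (\<lambda>z. a z * a z) x x'" for x'
    by (simp add: Aint_def power2_eq_square)
  have i2: "set_integrable lborel U' (\<lambda>x'. (Aint \<phi> y a x x')\<^sup>2)"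
    unfolding sq set_integrable_def
    by (rule integrable_mult_indicator[OF U'_borel Aint_integrable[OF adm_mult[OF \<phi>] Wa smooth_on_mult[OF a a] y x]])
      (use \<phi> adm_def in blast)
  have ca: "continuous_on Wa a" using smooth_on_continuous[OF a, of "[]"] by simp
  have cpj: "continuous_on (closure U') (\<lambda>x'. pjoin x x')" by (intro continuous_intros)
  have img: "(\<lambda>x'. pjoin x x') ` closure U' \<subseteq> closure (Ut U U')" using x by (auto simp: closure_Ut)
  have i3: "set_integrable lborel U' (\<lambda>x'. (a (pjoin x x'))\<^sup>2 * wgt y (pjoin x x'))"
  proof (rule set_integrable_closure[OF _ U'(2)])
    show "continuous_on (closure U') (\<lambda>x'. (a (pjoin x x'))\<^sup>2 * wgt y (pjoin x x'))"
      by (intro continuous_intros continuous_on_compose2[OF continuous_on_subset[OF ca Wa(2)] cpj img]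
          continuous_on_compose2[OF wgt_cont_closure[OF y] cpj img])
  qed (use U'(1) in simp)
  have "(Aop \<phi> y a x)\<^sup>2 = (LINT x':U'|lborel. Aint \<phi> y a x x')\<^sup>2"
    using Aop_U'[OF \<phi> Wa a y x] by simp
  also have "\<dots> \<le> measure lborel U' * (LINT x':U'|lborel. (Aint \<phi> y a x x')\<^sup>2)"
    by (rule cauchy_schwarz_set[OF U'_borel U'_fin i1 i2])
  finally have st1: "(Aop \<phi> y a x)\<^sup>2 \<le> measure lborel U' * (LINT x':U'|lborel. (Aint \<phi> y a x x')\<^sup>2)" .
  have "(LINT x':U'|lborel. (Aint \<phi> y a x x')\<^sup>2) \<le> (LINT x':U'|lborel. C\<^sup>2 * dhi * ((a (pjoin x x'))\<^sup>2 * wgt y (pjoin x x')))"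
  proof (rule set_integral_mono[OF i2])
    show "set_integrable lborel U' (\<lambda>x'. C\<^sup>2 * dhi * ((a (pjoin x x'))\<^sup>2 * wgt y (pjoin x x')))"
      using i3 by simp
    fix x' assume x': "x' \<in> U'"
    define z where "z = pjoin x x'"
    have zc: "z \<in> closure (Ut U U')" unfolding z_def using img x' closure_subset by blast
    hence K: "(z, y) \<in> K0" using y unfolding K0_def by auto
    have pb: "\<bar>\<phi> (z, y)\<bar> \<le> C" using C K by blast
    hence p2: "(\<phi> (z, y))\<^sup>2 \<le> C\<^sup>2" by (meson abs_ge_zero order_trans power2_le_iff_abs_le)
    have w: "1 \<le> dhi * wgt y z" using wgt_bounds[OF zc y] dlo_dhi(2) by (simp add: field_simps)
    have "(Aint \<phi> y a x x')\<^sup>2 = (a z)\<^sup>2 * (\<phi> (z, y))\<^sup>2" by (simp add: Aint_def z_def power_mult_distrib)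
    also have "\<dots> \<le> (a z)\<^sup>2 * C\<^sup>2" by (rule mult_left_mono[OF p2]) simp
    also have "\<dots> \<le> (a z)\<^sup>2 * C\<^sup>2 * (dhi * wgt y z)" using mult_left_mono[OF w, of "(a z)\<^sup>2 * C\<^sup>2"] by simp
    finally show "(Aint \<phi> y a x x')\<^sup>2 \<le> C\<^sup>2 * dhi * ((a (pjoin x x'))\<^sup>2 * wgt y (pjoin x x'))"
      by (simp add: z_def mult_ac)
  qed
  also have "(LINT x':U'|lborel. C\<^sup>2 * dhi * ((a (pjoin x x'))\<^sup>2 * wgt y (pjoin x x')))
      = C\<^sup>2 * dhi * (LINT x':U'|lborel. (a (pjoin x x'))\<^sup>2 * wgt y (pjoin x x'))" by simp
  finally have st2: "(LINT x':U'|lborel. (Aint \<phi> y a x x')\<^sup>2) \<le> C\<^sup>2 * dhi * (LINT x':U'|lborel. (a (pjoin x x'))\<^sup>2 * wgt y (pjoin x x'))" .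
  show ?thesis using order_trans[OF st1 mult_left_mono[OF st2 measure_nonneg]] by (simp add: mult_ac)
qed


lemma wint_nonneg:
  assumes y: "y \<in> closure T"
  shows "0 \<le> (LINT z:Ut U U'|lborel. (g z)\<^sup>2 * wgt y z)"
proof -
  have "0 \<le> (g z)\<^sup>2 * wgt y z" if "z \<in> Ut U U'" for z
  proof -
    have "z \<in> closure (Ut U U')" using that closure_subset by blast
    hence "0 < wgt y z" using wgt_bounds(1) y by blast
    thus ?thesis by simp
  qed
  thus ?thesis unfolding set_lebesgue_integral_def
    by (intro integral_nonneg_AE) (auto simp: indicator_def)
qed

lemma main_est:
  assumes I: "set I \<subseteq> {..<d}"
  shows "\<exists>C\<ge>0. \<forall>y\<in>closure T. \<forall>Wh h n. open Wh \<and> closure (Ut U U') \<subseteq> Wh \<and> smooth_on Wh h \<and> length I \<le> n \<longrightarrow>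
    sqrt (LINT x:U|lborel. (op_I (\<lambda>i. X i y) I (Aop phi0 y h) x)\<^sup>2) \<le> C * sob_norm d (lift_vf X u y) (wgt y) (Ut U U') n h"
proof -
  obtain TL where TL1: "\<forall>q\<in>set TL. set (fst q) \<subseteq> {..<d} \<and> length (fst q) \<le> length I \<and> adm (snd q)"
    and TL2: "\<forall>y\<in>closure T. \<forall>Wh h. open Wh \<and> closure (Ut U U') \<subseteq> Wh \<and> smooth_on Wh h \<longrightarrow>
       (\<forall>x\<in>U. op_I (\<lambda>i. X i y) I (Aop phi0 y h) x = (\<Sum>q\<leftarrow>TL. Aop (snd q) y (op_I (lift_vf X u y) (fst q) h) x))"
    using RL[OF I] by blast
  have "\<forall>q\<in>set TL. \<exists>C. 0 \<le> C \<and> (\<forall>p\<in>K0. \<bar>snd q p\<bar> \<le> C)" using TL1 adm_bound by blast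
  then obtain Cf where Cf: "\<And>q. q \<in> set TL \<Longrightarrow> 0 \<le> Cf q \<and> (\<forall>p\<in>K0. \<bar>snd q p\<bar> \<le> Cf q)"
    by metis
  define cq where "cq q = measure lborel U' * (Cf q)\<^sup>2 * dhi" for q
  have cq0: "0 \<le> cq q" for q unfolding cq_def using dlo_dhi(2) by simp
  define len where "len = real (length TL)"
  define C where "C = (\<Sum>q\<leftarrow>TL. sqrt (len * cq q))"
  have C0: "0 \<le> C" unfolding C_def by (rule sum_list_nonneg) (use cq0 in \<open>auto simp: len_def\<close>)
  have main: "sqrt (LINT x:U|lborel. (op_I (\<lambda>i. X i y) I (Aop phi0 y h) x)\<^sup>2) \<le> C * sob_norm d (lift_vf X u y) (wgt y) (Ut U U') n h"
    if y: "y \<in> closure T" and Wh: "open Wh" "closure (Ut U U') \<subseteq> Wh" and h: "smooth_on Wh h" and n: "length I \<le> n"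
    for y Wh h n
  proof -
    define Sy where "Sy = Wh \<inter> {z. (z, y) \<in> Oj}"
    define hq where "hq (q :: nat list \<times> ((real^('p+'k)) \<times> (real^'q) \<Rightarrow> real)) = op_I (lift_vf X u y) (fst q) h" for q
    have oS: "open Sy" and cS: "closure (Ut U U') \<subseteq> Sy"
      using op_lift_smooth[OF Wh h y, of "[]"] unfolding Sy_def by auto
    have shq: "\<And>q. q \<in> set TL \<Longrightarrow> smooth_on Sy (hq q)"
      using op_lift_smooth(3)[OF Wh h y] TL1 unfolding Sy_def hq_def by auto
    define aq where "aq q = Aop (snd q) y (hq q)" for q
    define Hq where "Hq q z = (hq q z)\<^sup>2 * wgt y z" for q z
    define Gq where "Gq q x = (LINT x':U'|lborel. Hq q (pjoin x x'))" for q x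
    define Iq where "Iq q = (LINT z:Ut U U'|lborel. Hq q z)" for q
    have iH: "set_integrable lborel (Ut U U') (Hq q)" if q: "q \<in> set TL" for q
    proof (rule set_integrable_closure)
      have "continuous_on (closure (Ut U U')) (hq q)"
        using smooth_on_continuous[OF shq[OF q], of "[]"] continuous_on_subset cS by auto
      thus "continuous_on (closure (Ut U U')) (Hq q)" unfolding Hq_def[abs_def]
        by (intro continuous_intros wgt_cont_closure[OF y])
      show "bounded (Ut U U')" using bounded_Ut[OF U(2) U'(2)] .
      show "Ut U U' \<in> sets borel" using open_Ut[OF U(1) U'(1)] by simp
    qed
    have iG: "set_integrable lborel U (Gq q)" if q: "q \<in> set TL" for q
      unfolding Gq_def using fubini_Ut_integrable[OF _ _ iH[OF q]] U(1) U'(1) by simp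
    have GI: "(LINT x:U|lborel. Gq q x) = Iq q" if q: "q \<in> set TL" for q
      unfolding Gq_def Iq_def using fubini_Ut[OF _ _ iH[OF q]] U(1) U'(1) by simp
    have Iq0: "0 \<le> Iq q" for q
    proof -
      have "0 \<le> Hq q z" if "z \<in> Ut U U'" for z
      proof -
        have "z \<in> closure (Ut U U')" using that closure_subset by blast
        hence "0 < wgt y z" using wgt_bounds(1) y by blast
        thus ?thesis unfolding Hq_def by simp
      qed
      thus ?thesis unfolding Iq_def set_lebesgue_integral_def
        by (intro integral_nonneg_AE) (auto simp: indicator_def)
    qed
    have saq: "\<exists>A. open A \<and> closure U \<subseteq> A \<and> smooth_on A (aq q)" if q: "q \<in> set TL" for q
      unfolding aq_def by (rule Aop_smooth[OF _ oS cS shq[OF q] y]) (use TL1 q in auto)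
    have caq: "continuous_on (closure U) (aq q)" if q: "q \<in> set TL" for q
    proof -
      obtain A where "open A" "closure U \<subseteq> A" "smooth_on A (aq q)" using saq[OF q] by blast
      thus ?thesis using smooth_on_continuous[of A "aq q" "[]"] continuous_on_subset by auto
    qed
    have eqU: "op_I (\<lambda>i. X i y) I (Aop phi0 y h) x = (\<Sum>q\<leftarrow>TL. aq q x)" if x: "x \<in> U" for x
      using TL2 y Wh h x unfolding aq_def hq_def by auto
    have cS2: "continuous_on (closure U) (\<lambda>x. (\<Sum>q\<leftarrow>TL. aq q x)\<^sup>2)"
    proof -
      have "continuous_on (closure U) (\<lambda>x. \<Sum>q\<leftarrow>TL. aq q x)"
        using caq by (induction TL) (auto intro!: continuous_intros)
      thus ?thesis by (intro continuous_intros)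
    qed
    have iL: "set_integrable lborel U (\<lambda>x. (op_I (\<lambda>i. X i y) I (Aop phi0 y h) x)\<^sup>2)"
      using set_integrable_cong_on[of U "\<lambda>x. (op_I (\<lambda>i. X i y) I (Aop phi0 y h) x)\<^sup>2" "\<lambda>x. (\<Sum>q\<leftarrow>TL. aq q x)\<^sup>2"]
        eqU set_integrable_closure[OF cS2 U(2)] U(1) by simp
    have iR: "set_integrable lborel U (\<lambda>x. len * (\<Sum>q\<leftarrow>TL. cq q * Gq q x))"
    proof -
      have "set_integrable lborel U (\<lambda>x. \<Sum>q\<leftarrow>TL. cq q * Gq q x)"
        by (rule set_integral_sum_list(1)) (use iG in auto)
      thus ?thesis by simp
    qed
    have "(LINT x:U|lborel. (op_I (\<lambda>i. X i y) I (Aop phi0 y h) x)\<^sup>2) \<le> (LINT x:U|lborel. len * (\<Sum>q\<leftarrow>TL. cq q * Gq q x))"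
    proof (rule set_integral_mono[OF iL iR])
      fix x assume x: "x \<in> U"
      have xc: "x \<in> closure U" using x closure_subset by blast
      have "(op_I (\<lambda>i. X i y) I (Aop phi0 y h) x)\<^sup>2 = (\<Sum>q\<leftarrow>TL. aq q x)\<^sup>2" using eqU[OF x] by simp
      also have "\<dots> \<le> len * (\<Sum>q\<leftarrow>TL. (aq q x)\<^sup>2)" unfolding len_def by (rule sq_sum_list_le)
      also have "(\<Sum>q\<leftarrow>TL. (aq q x)\<^sup>2) \<le> (\<Sum>q\<leftarrow>TL. cq q * Gq q x)"
      proof (rule sum_list_mono)
        fix q assume q: "q \<in> set TL"
        show "(aq q x)\<^sup>2 \<le> cq q * Gq q x"
          unfolding aq_def cq_def Gq_def Hq_def
          by (rule term_est[OF _ _ y oS cS shq[OF q] xc]) (use TL1 q Cf in auto)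
      qed
      hence "len * (\<Sum>q\<leftarrow>TL. (aq q x)\<^sup>2) \<le> len * (\<Sum>q\<leftarrow>TL. cq q * Gq q x)"
        by (rule mult_left_mono) (simp add: len_def)
      finally show "(op_I (\<lambda>i. X i y) I (Aop phi0 y h) x)\<^sup>2 \<le> len * (\<Sum>q\<leftarrow>TL. cq q * Gq q x)" .
    qed
    also have "(LINT x:U|lborel. len * (\<Sum>q\<leftarrow>TL. cq q * Gq q x)) = len * (\<Sum>q\<leftarrow>TL. cq q * Iq q)"
    proof -
      have "(LINT x:U|lborel. (\<Sum>q\<leftarrow>TL. cq q * Gq q x)) = (\<Sum>q\<leftarrow>TL. (LINT x:U|lborel. cq q * Gq q x))"
        by (rule set_integral_sum_list(2)) (use iG in auto)
      also have "\<dots> = (\<Sum>q\<leftarrow>TL. cq q * Iq q)"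
        by (rule arg_cong[where f=sum_list], rule map_cong[OF refl]) (simp add: GI)
      finally show ?thesis by simp
    qed
    finally have est: "(LINT x:U|lborel. (op_I (\<lambda>i. X i y) I (Aop phi0 y h) x)\<^sup>2) \<le> len * (\<Sum>q\<leftarrow>TL. cq q * Iq q)" .
    have "sqrt (LINT x:U|lborel. (op_I (\<lambda>i. X i y) I (Aop phi0 y h) x)\<^sup>2) \<le> sqrt (\<Sum>q\<leftarrow>TL. len * cq q * Iq q)"
      using real_sqrt_le_mono[OF est] by (simp add: sum_list_const_mult mult_ac)
    also have "\<dots> \<le> (\<Sum>q\<leftarrow>TL. sqrt (len * cq q * Iq q))"
      by (rule sqrt_sum_list_le) (use cq0 Iq0 in \<open>auto simp: len_def\<close>)
    also have "\<dots> \<le> (\<Sum>q\<leftarrow>TL. sqrt (len * cq q) * sob_norm d (lift_vf X u y) (wgt y) (Ut U U') n h)"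
    proof (rule sum_list_mono)
      fix q assume q: "q \<in> set TL"
      have m: "fst q \<in> mindices d n" using TL1 q n unfolding mindices_def by auto
      have this_le: "sqrt (Iq q) \<le> sob_norm d (lift_vf X u y) (wgt y) (Ut U U') n h"
        unfolding sob_norm_def Iq_def Hq_def hq_def
        by (rule le_sum_nonneg_term[OF finite_mindices m, where f="\<lambda>J. sqrt (LINT z:Ut U U'|lborel. (op_I (lift_vf X u y) J h z)\<^sup>2 * wgt y z)"])
          (simp add: wint_nonneg[OF y])
      show "sqrt (len * cq q * Iq q) \<le> sqrt (len * cq q) * sob_norm d (lift_vf X u y) (wgt y) (Ut U U') n h"
      proof -
        have "0 \<le> sqrt len * sqrt (cq q)" using cq0[of q] by (simp add: len_def)
        from mult_left_mono[OF this_le this] show ?thesis by (simp add: real_sqrt_mult)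
      qed
    qed
    also have "\<dots> = C * sob_norm d (lift_vf X u y) (wgt y) (Ut U U') n h"
      unfolding C_def by (simp add: sum_list_mult_const)
    finally show ?thesis .
  qed
  show ?thesis using C0 main by blast
qed

end

lemma mem_closure_Ut: "z \<in> closure (Ut A B) \<longleftrightarrow> pfst z \<in> closure A \<and> psnd z \<in> closure B"
  unfolding closure_Ut by (simp add: Ut_def)

context setting_B begin

definition "VX y = {x. (x, y) \<in> OX}"

lemma VX: "open (VX y)" "y \<in> closure T \<Longrightarrow> closure U \<subseteq> VX y" "i < d \<Longrightarrow> smooth_on (VX y) (X i y)"
proof -
  have o: "open (VX y)" unfolding VX_def
    using slice_smooth(1)[OF smooth_on_const[OF OX(1)], of y] smooth_on_open by blast
  show "open (VX y)" by (rule o)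
  show "y \<in> closure T \<Longrightarrow> closure U \<subseteq> VX y" unfolding VX_def using OX(2) by auto
  assume i: "i < d"
  have "(\<lambda>x. (\<lambda>(x, y). X i y x) (x, y)) = X i y" by auto
  thus "smooth_on (VX y) (X i y)" unfolding VX_def using slice_smooth(1)[OF OX(3)[OF i], of y] by simp
qed

lemma op_X_smooth:
  assumes "open W" "smooth_on W g" "set J \<subseteq> {..<d}"
  shows "smooth_on (W \<inter> VX y) (op_I (\<lambda>i. X i y) J g)"
proof (rule op_I_smooth)
  have o: "open (W \<inter> VX y)" using assms(1) VX(1) by blast
  show "smooth_on (W \<inter> VX y) g" by (rule smooth_on_subset[OF assms(2) o]) auto
  fix i assume "i \<in> set J"
  hence "i < d" using assms(3) by auto
  thus "smooth_on (W \<inter> VX y) (X i y)" using smooth_on_subset[OF VX(3) o] by auto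
qed

lemma E_id:
  fixes y :: "real^'q"
  assumes W: "open W" and g: "smooth_on W g" and J: "set J \<subseteq> {..<d}"
  defines "S \<equiv> {z. pfst z \<in> W \<inter> VX y} \<inter> {z. (z, y) \<in> Oj}"
  shows "z \<in> S \<Longrightarrow> op_I (lift_vf X u y) J (Eop g) z = op_I (\<lambda>i. X i y) J g (pfst z)"
  using J
proof (induction J arbitrary: z)
  case Nil thus ?case by (simp add: Eop_def)
next
  case (Cons i J)
  have J': "set J \<subseteq> {..<d}" using Cons.prems by auto
  have oS: "open S"
  proof -
    have "open {z::real^('p+'k). pfst z \<in> W \<inter> VX y}"
      using open_vimage[OF open_Int[OF W VX(1)] linear_continuous_on[OF bounded_linear_pfst]] by (simp add: vimage_def)
    moreover have "open {z. (z, y) \<in> Oj}" using slice_smooth(1)[OF smooth_on_const[OF Oj(1)], of y] smooth_on_open by blast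
    ultimately show ?thesis unfolding S_def by blast
  qed
  define F where "F = op_I (\<lambda>i. X i y) J g"
  have sF: "smooth_on (W \<inter> VX y) F" unfolding F_def by (rule op_X_smooth[OF W g J'])
  have "op_I (lift_vf X u y) (i # J) (Eop g) z = frechet_derivative (op_I (lift_vf X u y) J (Eop g)) (at z) (lift_vf X u y i z)"
    by (simp add: vf_apply_def)
  also have "frechet_derivative (op_I (lift_vf X u y) J (Eop g)) (at z) = frechet_derivative (\<lambda>z. F (pfst z)) (at z)"
    by (rule frechet_derivative_cong_open[OF oS Cons.prems(1)]) (use Cons.IH[OF _ J'] in \<open>auto simp: F_def\<close>)
  also have "frechet_derivative (\<lambda>z. F (pfst z)) (at z) (lift_vf X u y i z) = dderiv [lift_vf X u y i z] (\<lambda>z. F (pfst z)) z"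
    by simp
  also have "\<dots> = dderiv [pfst (lift_vf X u y i z)] F (pfst z)"
    using dderiv_pre_linear[OF sF bounded_linear_pfst, of z "[lift_vf X u y i z]"] Cons.prems(1) by (simp add: S_def)
  also have "\<dots> = vf_apply (X i y) F (pfst z)" by (simp add: vf_apply_def lift_vf_def)
  finally show ?case by (simp add: F_def)
qed

lemma smooth_cl_rep:
  assumes "smooth_cl V f"
  obtains W g where "open W" "closure V \<subseteq> W" "smooth_on W g" "\<And>z. z \<in> closure V \<Longrightarrow> f z = g z"
proof -
  from assms obtain W g where "open W" "closure V \<subseteq> W" "smooth_on W g" "\<forall>z\<in>closure V. f z = g z"
    unfolding smooth_cl_def by blast
  thus ?thesis using that by blast
qed

lemma Eop_smooth_cl:
  assumes W: "open W" "closure U \<subseteq> W" and g: "smooth_on W g"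
  shows "open {z::real^('p+'k). pfst z \<in> W}" "closure (Ut U U') \<subseteq> {z. pfst z \<in> W}" "smooth_on {z::real^('p+'k). pfst z \<in> W} (Eop g)"
proof -
  show oW: "open {z::real^('p+'k). pfst z \<in> W}"
    using open_vimage[OF W(1) linear_continuous_on[OF bounded_linear_pfst]] by (simp add: vimage_def)
  show "closure (Ut U U') \<subseteq> {z. pfst z \<in> W}"
  proof
    fix z assume "z \<in> closure (Ut U U')"
    hence "z \<in> Ut (closure U) (closure U')" by (simp only: closure_Ut)
    thus "z \<in> {z. pfst z \<in> W}" using W(2) unfolding Ut_def by auto
  qed
  have A: "smooth_on {z::real^('p+'k). pfst z \<in> W} (\<lambda>z. g (pfst z))"
    using smooth_on_pre_linear[OF g bounded_linear_pfst oW] by auto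
  have B: "Eop g = (\<lambda>z::real^('p+'k). g (pfst z))" by (rule ext) (simp add: Eop_def)
  show "smooth_on {z::real^('p+'k). pfst z \<in> W} (Eop g)" using A B by simp
qed


lemma Ut_sub_S:
  assumes W: "closure U \<subseteq> W" and y: "y \<in> closure T"
  shows "Ut U U' \<subseteq> {z. pfst z \<in> W \<inter> VX y} \<inter> {z. (z, y) \<in> Oj}"
proof
  fix z assume z: "z \<in> Ut U U'"
  hence "pfst z \<in> closure U" using closure_subset unfolding Ut_def by blast
  hence "pfst z \<in> W \<inter> VX y" using W VX(2)[OF y] by blast
  moreover have "(z, y) \<in> Oj" using Oj(2) y z closure_subset[of "Ut U U'"] by blast
  ultimately show "z \<in> {z. pfst z \<in> W \<inter> VX y} \<inter> {z. (z, y) \<in> Oj}" by simp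
qed

lemma E_est:
  assumes f: "smooth_cl U f" and y: "y \<in> closure T"
  shows "smooth_cl (Ut U U') (Eop f)"
    "sob_in d (lift_vf X u y) (wgt y) (Ut U U') k (Eop f)"
    "sob_norm d (lift_vf X u y) (wgt y) (Ut U U') k (Eop f) \<le> sqrt (measure lborel U' / dlo) * sob_norm d (\<lambda>i. X i y) (\<lambda>z. 1) U k f"
proof -
  obtain Wg g0 where Wg: "open Wg" "closure U \<subseteq> Wg" and g0: "smooth_on Wg g0" and fg: "\<And>z. z \<in> closure U \<Longrightarrow> f z = g0 z"
    using smooth_cl_rep[OF f] by blast
  note E = Eop_smooth_cl[OF Wg g0]
  have EfEg: "Eop f z = Eop g0 z" if "z \<in> closure (Ut U U')" for z
  proof -
    have "pfst z \<in> closure U" using that by (simp add: mem_closure_Ut)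
    thus ?thesis using fg by (simp add: Eop_def)
  qed
  show "smooth_cl (Ut U U') (Eop f)" unfolding smooth_cl_def using E EfEg by metis
  have oUt: "open (Ut U U')" using open_Ut[OF U(1) U'(1)] .
  have bUt: "Ut U U' \<in> sets borel" using oUt by simp
  have key: "set_integrable lborel (Ut U U') (\<lambda>z. (op_I (lift_vf X u y) J (Eop f) z)\<^sup>2 * wgt y z) \<and>
      sqrt (LINT z:Ut U U'|lborel. (op_I (lift_vf X u y) J (Eop f) z)\<^sup>2 * wgt y z)
        \<le> sqrt (measure lborel U' / dlo) * sqrt (LINT x:U|lborel. (op_I (\<lambda>i. X i y) J f x)\<^sup>2 * 1)"
    if J: "J \<in> mindices d k" for J
  proof -
    have Jd: "set J \<subseteq> {..<d}" using J unfolding mindices_def by auto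
    define F where "F = op_I (\<lambda>i. X i y) J g0"
    have sF: "smooth_on (Wg \<inter> VX y) F" unfolding F_def by (rule op_X_smooth[OF Wg(1) g0 Jd])
    have cF: "continuous_on (closure U) F"
      using smooth_on_continuous[OF sF, of "[]"] continuous_on_subset Wg(2) VX(2)[OF y] by fastforce
    have eq1: "op_I (lift_vf X u y) J (Eop f) z = F (pfst z)" if z: "z \<in> Ut U U'" for z
    proof -
      have "op_I (lift_vf X u y) J (Eop f) z = op_I (lift_vf X u y) J (Eop g0) z"
        by (rule op_I_cong_open[OF oUt _ z]) (use EfEg closure_subset in blast)
      also have "\<dots> = F (pfst z)" unfolding F_def
        by (rule E_id[OF Wg(1) g0 Jd]) (use Ut_sub_S[OF Wg(2) y] z in blast)
      finally show ?thesis .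
    qed
    have eq2: "op_I (\<lambda>i. X i y) J f x = F x" if x: "x \<in> U" for x
      unfolding F_def by (rule op_I_cong_open[OF U(1) _ x]) (use fg closure_subset in blast)
    have img: "pfst ` closure (Ut U U') \<subseteq> closure U" by (auto simp: mem_closure_Ut)
    have cFp: "continuous_on (closure (Ut U U')) (\<lambda>z. F (pfst z))"
      by (rule continuous_on_compose2[OF cF _ img]) (intro continuous_intros)
    define H where "H z = (F (pfst z))\<^sup>2 * wgt y z" for z
    have iH: "set_integrable lborel (Ut U U') H" unfolding H_def[abs_def]
      by (rule set_integrable_closure[OF _ bounded_Ut[OF U(2) U'(2)] bUt])
        (intro continuous_intros cFp wgt_cont_closure[OF y])
    have iH2: "set_integrable lborel (Ut U U') (\<lambda>z. 1 / dlo * (F (pfst z))\<^sup>2)"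
      by (rule set_integrable_closure[OF _ bounded_Ut[OF U(2) U'(2)] bUt]) (intro continuous_intros cFp)
    have iH3: "set_integrable lborel (Ut U U') (\<lambda>z. (F (pfst z))\<^sup>2)"
      by (rule set_integrable_closure[OF _ bounded_Ut[OF U(2) U'(2)] bUt]) (intro continuous_intros cFp)
    have sin: "set_integrable lborel (Ut U U') (\<lambda>z. (op_I (lift_vf X u y) J (Eop f) z)\<^sup>2 * wgt y z)"
      using set_integrable_cong_on[of "Ut U U'" "\<lambda>z. (op_I (lift_vf X u y) J (Eop f) z)\<^sup>2 * wgt y z" H] iH eq1
      unfolding H_def by simp
    have "(LINT z:Ut U U'|lborel. (op_I (lift_vf X u y) J (Eop f) z)\<^sup>2 * wgt y z) = (LINT z:Ut U U'|lborel. H z)"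
      by (rule set_lebesgue_integral_cong) (use oUt eq1 in \<open>auto simp: H_def\<close>)
    also have "\<dots> \<le> (LINT z:Ut U U'|lborel. 1 / dlo * (F (pfst z))\<^sup>2)"
    proof (rule set_integral_mono[OF iH iH2])
      fix z assume z: "z \<in> Ut U U'"
      hence "wgt y z \<le> 1 / dlo" using wgt_bounds(2)[OF _ y] closure_subset by blast
      from mult_right_mono[OF this, of "(F (pfst z))\<^sup>2"]
      show "H z \<le> 1 / dlo * (F (pfst z))\<^sup>2" unfolding H_def by (simp add: mult.commute)
    qed
    also have "\<dots> = 1 / dlo * (LINT z:Ut U U'|lborel. (F (pfst z))\<^sup>2)" by simp
    also have "(LINT z:Ut U U'|lborel. (F (pfst z))\<^sup>2) = (LINT x:U|lborel. LINT x':U'|lborel. (F x)\<^sup>2)"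
      using fubini_Ut[OF _ _ iH3] U(1) U'(1) by simp
    also have "\<dots> = (LINT x:U|lborel. measure lborel U' * (op_I (\<lambda>i. X i y) J f x)\<^sup>2 * 1)"
    proof (rule set_lebesgue_integral_cong)
      show "U \<in> sets lborel" using U(1) by simp
      show "\<forall>x. x \<in> U \<longrightarrow> (LINT x':U'|lborel. (F x)\<^sup>2) = measure lborel U' * (op_I (\<lambda>i. X i y) J f x)\<^sup>2 * 1"
      proof (intro allI impI)
        fix x assume x: "x \<in> U"
        have "(LINT x':U'|lborel. (F x)\<^sup>2) = measure lborel U' *\<^sub>R (F x)\<^sup>2" by (rule set_integral_const[OF U'_borel U'_fin])
        thus "(LINT x':U'|lborel. (F x)\<^sup>2) = measure lborel U' * (op_I (\<lambda>i. X i y) J f x)\<^sup>2 * 1" using eq2[OF x] by simp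
      qed
    qed
    also have "\<dots> = measure lborel U' * (LINT x:U|lborel. (op_I (\<lambda>i. X i y) J f x)\<^sup>2 * 1)"
      by (simp add: mult.assoc)
    finally have le: "(LINT z:Ut U U'|lborel. (op_I (lift_vf X u y) J (Eop f) z)\<^sup>2 * wgt y z)
        \<le> measure lborel U' / dlo * (LINT x:U|lborel. (op_I (\<lambda>i. X i y) J f x)\<^sup>2 * 1)"
      by (simp add: field_simps)
    have "sqrt (LINT z:Ut U U'|lborel. (op_I (lift_vf X u y) J (Eop f) z)\<^sup>2 * wgt y z)
        \<le> sqrt (measure lborel U' / dlo * (LINT x:U|lborel. (op_I (\<lambda>i. X i y) J f x)\<^sup>2 * 1))"
      by (rule real_sqrt_le_mono[OF le])
    also have "\<dots> = sqrt (measure lborel U' / dlo) * sqrt (LINT x:U|lborel. (op_I (\<lambda>i. X i y) J f x)\<^sup>2 * 1)"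
      by (simp only: real_sqrt_mult)
    finally show ?thesis using sin by blast
  qed
  show "sob_in d (lift_vf X u y) (wgt y) (Ut U U') k (Eop f)"
    unfolding sob_in_def using key by blast
  show "sob_norm d (lift_vf X u y) (wgt y) (Ut U U') k (Eop f) \<le> sqrt (measure lborel U' / dlo) * sob_norm d (\<lambda>i. X i y) (\<lambda>z. 1) U k f"
    unfolding sob_norm_def sum_distrib_left by (rule sum_mono) (use key in blast)
qed

end

context setting_B begin

lemma Rop_Aop:
  assumes WG: "open WG" "closure (Ut U U') \<subseteq> WG" and G: "smooth_on WG G"
    and gG: "\<And>z. z \<in> closure (Ut U U') \<Longrightarrow> g z = G z" and y: "y \<in> closure T" and x: "x \<in> closure U"
  shows "Rop U' \<zeta> g x = Aop phi0 y G x"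
    "set_integrable lborel U' (\<lambda>x'. g (pjoin x x') * \<zeta> x')"
proof -
  have eq: "g (pjoin x x') * \<zeta> x' = Aint phi0 y G x x'" if x': "x' \<in> U'" for x'
  proof -
    have "pjoin x x' \<in> closure (Ut U U')" using x x' closure_subset by (auto simp: mem_closure_Ut)
    thus ?thesis using gG by (simp add: Aint_def phi0_def)
  qed
  have "Rop U' \<zeta> g x = (LINT x':U'|lborel. Aint phi0 y G x x')"
    unfolding Rop_def by (rule set_lebesgue_integral_cong) (use U'(1) eq in auto)
  also have "\<dots> = Aop phi0 y G x" by (rule Aop_U'[OF adm_phi0 WG G y x])
  finally show "Rop U' \<zeta> g x = Aop phi0 y G x" .
  have "set_integrable lborel U' (Aint phi0 y G x)"
    unfolding set_integrable_def by (rule integrable_mult_indicator[OF U'_borel Aint_integrable[OF adm_phi0 WG G y x]])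
  thus "set_integrable lborel U' (\<lambda>x'. g (pjoin x x') * \<zeta> x')"
    using set_integrable_cong_on[of U' "\<lambda>x'. g (pjoin x x') * \<zeta> x'" "Aint phi0 y G x"] eq by simp
qed

lemma out_smooth:
  assumes g: "smooth_cl (Ut U U') g" and y: "y \<in> closure T"
  shows "smooth_cl U (Rop U' \<zeta> g)"
proof -
  obtain WG G where WG: "open WG" "closure (Ut U U') \<subseteq> WG" and G: "smooth_on WG G"
    and gG: "\<And>z. z \<in> closure (Ut U U') \<Longrightarrow> g z = G z"
    using smooth_cl_rep[OF g] by blast
  obtain A where A: "open A" "closure U \<subseteq> A" "smooth_on A (Aop phi0 y G)"
    using Aop_smooth[OF adm_phi0 WG G y] by blast
  show ?thesis unfolding smooth_cl_def
    using A Rop_Aop(1)[OF WG G gG y] by metis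
qed

lemma out_est:
  "\<exists>C\<ge>0. \<forall>y\<in>closure T. \<forall>g. smooth_cl (Ut U U') g \<longrightarrow>
     sob_in d (\<lambda>i. X i y) (\<lambda>z. 1) U n (Rop U' \<zeta> g) \<and>
     sob_norm d (\<lambda>i. X i y) (\<lambda>z. 1) U n (Rop U' \<zeta> g) \<le> C * sob_norm d (lift_vf X u y) (wgt y) (Ut U U') n g"
proof -
  have "\<forall>I\<in>mindices d n. \<exists>C\<ge>0. \<forall>y\<in>closure T. \<forall>Wh h m. open Wh \<and> closure (Ut U U') \<subseteq> Wh \<and> smooth_on Wh h \<and> length I \<le> m \<longrightarrow>
    sqrt (LINT x:U|lborel. (op_I (\<lambda>i. X i y) I (Aop phi0 y h) x)\<^sup>2) \<le> C * sob_norm d (lift_vf X u y) (wgt y) (Ut U U') m h"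
    using main_est unfolding mindices_def by blast
  then obtain CI where CI: "\<And>I. I \<in> mindices d n \<Longrightarrow> 0 \<le> CI I \<and> (\<forall>y\<in>closure T. \<forall>Wh h m. open Wh \<and> closure (Ut U U') \<subseteq> Wh \<and> smooth_on Wh h \<and> length I \<le> m \<longrightarrow>
    sqrt (LINT x:U|lborel. (op_I (\<lambda>i. X i y) I (Aop phi0 y h) x)\<^sup>2) \<le> CI I * sob_norm d (lift_vf X u y) (wgt y) (Ut U U') m h)"
    by metis
  define C where "C = (\<Sum>I\<in>mindices d n. CI I)"
  have C0: "0 \<le> C" unfolding C_def by (rule sum_nonneg) (use CI in blast)
  have main: "sob_in d (\<lambda>i. X i y) (\<lambda>z. 1) U n (Rop U' \<zeta> g) \<and>
     sob_norm d (\<lambda>i. X i y) (\<lambda>z. 1) U n (Rop U' \<zeta> g) \<le> C * sob_norm d (lift_vf X u y) (wgt y) (Ut U U') n g"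
    if y: "y \<in> closure T" and g: "smooth_cl (Ut U U') g" for y g
  proof -
    obtain WG G where WG: "open WG" "closure (Ut U U') \<subseteq> WG" and G: "smooth_on WG G"
      and gG: "\<And>z. z \<in> closure (Ut U U') \<Longrightarrow> g z = G z"
      using smooth_cl_rep[OF g] by blast
    obtain A where A: "open A" "closure U \<subseteq> A" "smooth_on A (Aop phi0 y G)"
      using Aop_smooth[OF adm_phi0 WG G y] by blast
    have opeq: "op_I (\<lambda>i. X i y) I (Rop U' \<zeta> g) x = op_I (\<lambda>i. X i y) I (Aop phi0 y G) x" if x: "x \<in> U" for I x
      by (rule op_I_cong_open[OF U(1) _ x]) (use Rop_Aop(1)[OF WG G gG y] closure_subset in blast)
    have nrm: "sob_norm d (lift_vf X u y) (wgt y) (Ut U U') n G = sob_norm d (lift_vf X u y) (wgt y) (Ut U U') n g"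
      unfolding sob_norm_def
    proof (rule sum.cong[OF refl])
      fix J
      have oUt: "open (Ut U U')" using open_Ut[OF U(1) U'(1)] .
      have "op_I (lift_vf X u y) J G z = op_I (lift_vf X u y) J g z" if z: "z \<in> Ut U U'" for z
        by (rule op_I_cong_open[OF oUt _ z]) (use gG closure_subset in \<open>metis subsetD\<close>)
      hence "(LINT z:Ut U U'|lborel. (op_I (lift_vf X u y) J G z)\<^sup>2 * wgt y z) = (LINT z:Ut U U'|lborel. (op_I (lift_vf X u y) J g z)\<^sup>2 * wgt y z)"
        by (intro set_lebesgue_integral_cong) (use oUt in auto)
      thus "sqrt (LINT z:Ut U U'|lborel. (op_I (lift_vf X u y) J G z)\<^sup>2 * wgt y z) = sqrt (LINT z:Ut U U'|lborel. (op_I (lift_vf X u y) J g z)\<^sup>2 * wgt y z)"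
        by simp
    qed
    have sin: "set_integrable lborel U (\<lambda>x. (op_I (\<lambda>i. X i y) I (Rop U' \<zeta> g) x)\<^sup>2 * 1)" if I: "I \<in> mindices d n" for I
    proof -
      have Id: "set I \<subseteq> {..<d}" using I unfolding mindices_def by auto
      have s: "smooth_on (A \<inter> VX y) (op_I (\<lambda>i. X i y) I (Aop phi0 y G))" by (rule op_X_smooth[OF A(1) A(3) Id])
      have c: "continuous_on (closure U) (op_I (\<lambda>i. X i y) I (Aop phi0 y G))"
        using smooth_on_continuous[OF s, of "[]"] continuous_on_subset A(2) VX(2)[OF y] by fastforce
      have "set_integrable lborel U (\<lambda>x. (op_I (\<lambda>i. X i y) I (Aop phi0 y G) x)\<^sup>2 * 1)"
        by (rule set_integrable_closure[OF _ U(2)]) (use U(1) c in \<open>auto intro!: continuous_intros\<close>)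
      thus ?thesis using set_integrable_cong_on[of U "\<lambda>x. (op_I (\<lambda>i. X i y) I (Rop U' \<zeta> g) x)\<^sup>2 * 1"
          "\<lambda>x. (op_I (\<lambda>i. X i y) I (Aop phi0 y G) x)\<^sup>2 * 1"] opeq by simp
    qed
    have "sob_norm d (\<lambda>i. X i y) (\<lambda>z. 1) U n (Rop U' \<zeta> g)
        = (\<Sum>I\<in>mindices d n. sqrt (LINT x:U|lborel. (op_I (\<lambda>i. X i y) I (Aop phi0 y G) x)\<^sup>2))"
      unfolding sob_norm_def
    proof (rule sum.cong[OF refl])
      fix I
      have "(LINT x:U|lborel. (op_I (\<lambda>i. X i y) I (Rop U' \<zeta> g) x)\<^sup>2 * 1) = (LINT x:U|lborel. (op_I (\<lambda>i. X i y) I (Aop phi0 y G) x)\<^sup>2)"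
        by (rule set_lebesgue_integral_cong) (use U(1) opeq in auto)
      thus "sqrt (LINT x:U|lborel. (op_I (\<lambda>i. X i y) I (Rop U' \<zeta> g) x)\<^sup>2 * 1) = sqrt (LINT x:U|lborel. (op_I (\<lambda>i. X i y) I (Aop phi0 y G) x)\<^sup>2)"
        by simp
    qed
    also have "\<dots> \<le> (\<Sum>I\<in>mindices d n. CI I * sob_norm d (lift_vf X u y) (wgt y) (Ut U U') n G)"
    proof (rule sum_mono)
      fix I assume I: "I \<in> mindices d n"
      hence "length I \<le> n" unfolding mindices_def by auto
      thus "sqrt (LINT x:U|lborel. (op_I (\<lambda>i. X i y) I (Aop phi0 y G) x)\<^sup>2) \<le> CI I * sob_norm d (lift_vf X u y) (wgt y) (Ut U U') n G"
        using CI[OF I] y WG G by blast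
    qed
    also have "\<dots> = C * sob_norm d (lift_vf X u y) (wgt y) (Ut U U') n g"
      unfolding C_def nrm by (simp add: sum_distrib_right)
    finally show ?thesis using sin unfolding sob_in_def by blast
  qed
  show ?thesis using C0 main by blast
qed

end

theorem proposition3p10:
  fixes U :: "(real^'p) set" and U' :: "(real^'k) set" and T :: "(real^'q) set"
    and d m lam :: nat
    and X :: "nat \<Rightarrow> real^'q \<Rightarrow> real^'p \<Rightarrow> real^'p"
    and u :: "nat \<Rightarrow> real^'q \<Rightarrow> real^('p + 'k) \<Rightarrow> real^'k"
    and B :: "'p + 'k \<Rightarrow> brk"
    and \<zeta> :: "real^'k \<Rightarrow> real"
    and Pt :: "real^'q \<Rightarrow> (real^('p + 'k) \<Rightarrow> real) \<Rightarrow> (real^('p + 'k) \<Rightarrow> real)"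
  assumes U: "open U" "0 \<in> U" "bounded U"
    and U': "open U'" "0 \<in> U'" "bounded U'"
    and T: "open T" "0 \<in> T" "bounded T"
    and X_smooth: "\<forall>i<d. \<exists>W. closure U \<times> closure T \<subseteq> W \<and> smooth_on W (\<lambda>(x, y). X i y x)"
    and u_smooth: "\<forall>i<d. \<exists>W. closure (Ut U U') \<times> closure T \<subseteq> W \<and> smooth_on W (\<lambda>(z, y). u i y z)"
    and free: "\<forall>y\<in>closure T. \<forall>z\<in>closure (Ut U U').
       dim (span {brk_eval (lift_vf X u y) b z | b. brk_ok d m b}) = free_nilp_dim d m"
    and N: "CARD('p + 'k) = free_nilp_dim d m"
    and B_ok: "\<forall>a. brk_ok d m (B a)"
    and B_basis: "\<forall>y\<in>closure T. \<forall>z\<in>closure (Ut U U'). det (comm_mat (lift_vf X u y) B z) \<noteq> 0"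
    and \<zeta>: "smooth_on UNIV \<zeta>" "compact (closure {x. \<zeta> x \<noteq> 0})" "closure {x. \<zeta> x \<noteq> 0} \<subseteq> U'"
       "(LINT x:U'|lborel. \<zeta> x) = 1"
    and Pt: "smoothing_family d (\<lambda>y. lift_vf X u y) (\<lambda>y. vol_density (lift_vf X u y) B) (Ut U U') T lam Pt"
  shows "smoothing_family d (\<lambda>y i. X i y) (\<lambda>y z. 1) U T lam (\<lambda>y f. Rop U' \<zeta> (Pt y (Eop f)))"
proof -
  have B_gens: "\<And>a. brk_gens (B a) \<subseteq> {..<d}" using B_ok unfolding brk_ok_def by blast
  interpret S: setting_B U U' T d X u \<zeta> B
    by unfold_locales (use U U' T X_smooth u_smooth \<zeta> B_gens B_basis in auto)
  have wgt: "S.wgt y = vol_density (lift_vf X u y) B" for y by (simp add: S.wgt_def[abs_def])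
  have cT: "y \<in> T \<Longrightarrow> y \<in> closure T" for y using closure_subset by blast
  have P1: "\<And>y f. y \<in> T \<Longrightarrow> smooth_cl (Ut U U') f \<Longrightarrow> smooth_cl (Ut U U') (Pt y f)"
    using Pt unfolding smoothing_family_def by blast
  have P2: "\<And>y f g a b z. y \<in> T \<Longrightarrow> smooth_cl (Ut U U') f \<Longrightarrow> smooth_cl (Ut U U') g \<Longrightarrow> z \<in> closure (Ut U U') \<Longrightarrow>
      Pt y (\<lambda>v. a * f v + b * g v) z = a * Pt y f z + b * Pt y g z"
    using Pt unfolding smoothing_family_def by blast
  have P3: "\<And>k. \<exists>C. \<forall>y\<in>T. \<forall>f. smooth_cl (Ut U U') f \<and> sob_in d (lift_vf X u y) (S.wgt y) (Ut U U') k f \<longrightarrow>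
        sob_in d (lift_vf X u y) (S.wgt y) (Ut U U') (k + lam) (Pt y f) \<and>
        sob_norm d (lift_vf X u y) (S.wgt y) (Ut U U') (k + lam) (Pt y f) \<le> C * sob_norm d (lift_vf X u y) (S.wgt y) (Ut U U') k f"
    using Pt unfolding smoothing_family_def wgt by blast
  have norm_nonneg: "0 \<le> sob_norm d (lift_vf X u y) (S.wgt y) (Ut U U') n h" if y: "y \<in> closure T" for y n h
    unfolding sob_norm_def by (rule sum_nonneg) (simp add: S.wint_nonneg[OF y])
  show ?thesis
    unfolding smoothing_family_def
  proof (intro conjI)
    show "\<forall>y\<in>T. \<forall>f. smooth_cl U f \<longrightarrow> smooth_cl U (Rop U' \<zeta> (Pt y (Eop f)))"
      using S.out_smooth P1 S.E_est(1) cT by blast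
  next
    show "\<forall>y\<in>T. \<forall>f g a b. smooth_cl U f \<longrightarrow> smooth_cl U g \<longrightarrow>
        (\<forall>z\<in>closure U. Rop U' \<zeta> (Pt y (Eop (\<lambda>v. a * f v + b * g v))) z =
           a * Rop U' \<zeta> (Pt y (Eop f)) z + b * Rop U' \<zeta> (Pt y (Eop g)) z)"
    proof (intro ballI allI impI)
      fix y f g a b z
      assume y: "y \<in> T" and f: "smooth_cl U f" and g: "smooth_cl U g" and z: "z \<in> closure U"
      have Ef: "smooth_cl (Ut U U') (Eop f)" and Eg: "smooth_cl (Ut U U') (Eop g)"
        using S.E_est(1) f g cT[OF y] by blast+
      have Eeq: "Eop (\<lambda>v. a * f v + b * g v) = (\<lambda>w. a * Eop f w + b * Eop g w)"
        by (rule ext) (simp add: Eop_def)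
      define g1 where "g1 = Pt y (Eop f)"
      define g2 where "g2 = Pt y (Eop g)"
      have s1: "smooth_cl (Ut U U') g1" and s2: "smooth_cl (Ut U U') g2"
        unfolding g1_def g2_def using P1[OF y] Ef Eg by blast+
      have i1: "set_integrable lborel U' (\<lambda>x'. g1 (pjoin z x') * \<zeta> x')"
      proof -
        obtain WG G where "open WG" "closure (Ut U U') \<subseteq> WG" "smooth_on WG G" "\<And>w. w \<in> closure (Ut U U') \<Longrightarrow> g1 w = G w"
          using S.smooth_cl_rep[OF s1] by blast
        from S.Rop_Aop(2)[OF this cT[OF y] z] show ?thesis .
      qed
      have i2: "set_integrable lborel U' (\<lambda>x'. g2 (pjoin z x') * \<zeta> x')"
      proof -
        obtain WG G where "open WG" "closure (Ut U U') \<subseteq> WG" "smooth_on WG G" "\<And>w. w \<in> closure (Ut U U') \<Longrightarrow> g2 w = G w"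
          using S.smooth_cl_rep[OF s2] by blast
        from S.Rop_Aop(2)[OF this cT[OF y] z] show ?thesis .
      qed
      have "Rop U' \<zeta> (Pt y (Eop (\<lambda>v. a * f v + b * g v))) z
          = (LINT x':U'|lborel. a * (g1 (pjoin z x') * \<zeta> x') + b * (g2 (pjoin z x') * \<zeta> x'))"
        unfolding Rop_def Eeq
      proof (rule set_lebesgue_integral_cong)
        show "U' \<in> sets lborel" using U'(1) by simp
        show "\<forall>x'. x' \<in> U' \<longrightarrow> Pt y (\<lambda>w. a * Eop f w + b * Eop g w) (pjoin z x') * \<zeta> x'
            = a * (g1 (pjoin z x') * \<zeta> x') + b * (g2 (pjoin z x') * \<zeta> x')"
        proof (intro allI impI)
          fix x' assume x': "x' \<in> U'"
          have "pjoin z x' \<in> closure (Ut U U')" using z x' closure_subset by (auto simp: mem_closure_Ut)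
          from P2[OF y Ef Eg this, of a b]
          show "Pt y (\<lambda>w. a * Eop f w + b * Eop g w) (pjoin z x') * \<zeta> x'
            = a * (g1 (pjoin z x') * \<zeta> x') + b * (g2 (pjoin z x') * \<zeta> x')"
            unfolding g1_def g2_def by (simp add: algebra_simps)
        qed
      qed
      also have "\<dots> = a * (LINT x':U'|lborel. g1 (pjoin z x') * \<zeta> x') + b * (LINT x':U'|lborel. g2 (pjoin z x') * \<zeta> x')"
        using set_integral_add(2)[OF set_integrable_mult_right[OF i1] set_integrable_mult_right[OF i2], of a b] by simp
      finally show "Rop U' \<zeta> (Pt y (Eop (\<lambda>v. a * f v + b * g v))) z =
           a * Rop U' \<zeta> (Pt y (Eop f)) z + b * Rop U' \<zeta> (Pt y (Eop g)) z"
        unfolding Rop_def g1_def g2_def .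
    qed
  next
    show "\<forall>k. \<exists>C. \<forall>y\<in>T. \<forall>f. smooth_cl U f \<and> sob_in d ((\<lambda>y i. X i y) y) ((\<lambda>y z. 1) y) U k f \<longrightarrow>
        sob_in d ((\<lambda>y i. X i y) y) ((\<lambda>y z. 1) y) U (k + lam) ((\<lambda>y f. Rop U' \<zeta> (Pt y (Eop f))) y f) \<and>
        sob_norm d ((\<lambda>y i. X i y) y) ((\<lambda>y z. 1) y) U (k + lam) ((\<lambda>y f. Rop U' \<zeta> (Pt y (Eop f))) y f)
          \<le> C * sob_norm d ((\<lambda>y i. X i y) y) ((\<lambda>y z. 1) y) U k f"
    proof
      fix k
      obtain CP where CP: "\<forall>y\<in>T. \<forall>f. smooth_cl (Ut U U') f \<and> sob_in d (lift_vf X u y) (S.wgt y) (Ut U U') k f \<longrightarrow>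
        sob_in d (lift_vf X u y) (S.wgt y) (Ut U U') (k + lam) (Pt y f) \<and>
        sob_norm d (lift_vf X u y) (S.wgt y) (Ut U U') (k + lam) (Pt y f) \<le> CP * sob_norm d (lift_vf X u y) (S.wgt y) (Ut U U') k f"
        using P3 by blast
      obtain CO where CO: "0 \<le> CO" "\<forall>y\<in>closure T. \<forall>g. smooth_cl (Ut U U') g \<longrightarrow>
         sob_in d (\<lambda>i. X i y) (\<lambda>z. 1) U (k + lam) (Rop U' \<zeta> g) \<and>
         sob_norm d (\<lambda>i. X i y) (\<lambda>z. 1) U (k + lam) (Rop U' \<zeta> g) \<le> CO * sob_norm d (lift_vf X u y) (S.wgt y) (Ut U U') (k + lam) g"
        using S.out_est by blast
      define CE where "CE = sqrt (measure lborel U' / S.dlo)"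
      have CE0: "0 \<le> CE" unfolding CE_def using S.dlo_dhi(1) by simp
      show "\<exists>C. \<forall>y\<in>T. \<forall>f. smooth_cl U f \<and> sob_in d ((\<lambda>y i. X i y) y) ((\<lambda>y z. 1) y) U k f \<longrightarrow>
        sob_in d ((\<lambda>y i. X i y) y) ((\<lambda>y z. 1) y) U (k + lam) ((\<lambda>y f. Rop U' \<zeta> (Pt y (Eop f))) y f) \<and>
        sob_norm d ((\<lambda>y i. X i y) y) ((\<lambda>y z. 1) y) U (k + lam) ((\<lambda>y f. Rop U' \<zeta> (Pt y (Eop f))) y f)
          \<le> C * sob_norm d ((\<lambda>y i. X i y) y) ((\<lambda>y z. 1) y) U k f"
      proof (rule exI[of _ "CO * max CP 0 * CE"], intro ballI allI impI)
        fix y f assume y: "y \<in> T" and f: "smooth_cl U f \<and> sob_in d ((\<lambda>y i. X i y) y) ((\<lambda>y z. 1) y) U k f"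
        have yc: "y \<in> closure T" using cT[OF y] .
        have f1: "smooth_cl U f" using f by blast
        have E1: "smooth_cl (Ut U U') (Eop f)" by (rule S.E_est(1)[OF f1 yc])
        have E2: "sob_in d (lift_vf X u y) (S.wgt y) (Ut U U') k (Eop f)" by (rule S.E_est(2)[OF f1 yc])
        have E3: "sob_norm d (lift_vf X u y) (S.wgt y) (Ut U U') k (Eop f) \<le> CE * sob_norm d (\<lambda>i. X i y) (\<lambda>z. 1) U k f"
          unfolding CE_def by (rule S.E_est(3)[OF f1 yc])
        have sPt: "smooth_cl (Ut U U') (Pt y (Eop f))" using P1[OF y E1] .
        have st1: "sob_norm d (lift_vf X u y) (S.wgt y) (Ut U U') (k + lam) (Pt y (Eop f))
            \<le> CP * sob_norm d (lift_vf X u y) (S.wgt y) (Ut U U') k (Eop f)"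
          using CP y E1 E2 by blast
        have st1': "CP * sob_norm d (lift_vf X u y) (S.wgt y) (Ut U U') k (Eop f)
            \<le> max CP 0 * sob_norm d (lift_vf X u y) (S.wgt y) (Ut U U') k (Eop f)"
          by (rule mult_right_mono[OF _ norm_nonneg[OF yc]]) simp
        have st2: "max CP 0 * sob_norm d (lift_vf X u y) (S.wgt y) (Ut U U') k (Eop f)
            \<le> max CP 0 * (CE * sob_norm d (\<lambda>i. X i y) (\<lambda>z. 1) U k f)"
          by (rule mult_left_mono[OF E3]) simp
        have o: "sob_in d (\<lambda>i. X i y) (\<lambda>z. 1) U (k + lam) (Rop U' \<zeta> (Pt y (Eop f))) \<and>
            sob_norm d (\<lambda>i. X i y) (\<lambda>z. 1) U (k + lam) (Rop U' \<zeta> (Pt y (Eop f)))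
              \<le> CO * sob_norm d (lift_vf X u y) (S.wgt y) (Ut U U') (k + lam) (Pt y (Eop f))"
          using CO(2) yc sPt by blast
        have "CO * sob_norm d (lift_vf X u y) (S.wgt y) (Ut U U') (k + lam) (Pt y (Eop f))
            \<le> CO * (max CP 0 * (CE * sob_norm d (\<lambda>i. X i y) (\<lambda>z. 1) U k f))"
          by (rule mult_left_mono[OF order_trans[OF st1 order_trans[OF st1' st2]] CO(1)])
        with o show "sob_in d ((\<lambda>y i. X i y) y) ((\<lambda>y z. 1) y) U (k + lam) ((\<lambda>y f. Rop U' \<zeta> (Pt y (Eop f))) y f) \<and>
          sob_norm d ((\<lambda>y i. X i y) y) ((\<lambda>y z. 1) y) U (k + lam) ((\<lambda>y f. Rop U' \<zeta> (Pt y (Eop f))) y f)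
            \<le> CO * max CP 0 * CE * sob_norm d ((\<lambda>y i. X i y) y) ((\<lambda>y z. 1) y) U k f"
          by (simp add: mult_ac)
      qed
    qed
  qed
qed

end
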